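(* Suppose $\Gamma_1\triangleright W_1\simeq\Gamma_2\triangleright W_2$, where both configurations are well-formed. Then for every channel $c$, if $c$ is idle in $\Gamma_1$ then $c$ is idle in $\Gamma_2$.
   Context: CCCP syntax. Fix a set of channels (ranged over by $c,d$) and a set of values containing data variables $x,y$ and a special error value $\mathtt{err}$; closed values $v,w$ contain no variables, and each closed value $v$ has a transmission time $\delta_v\in\mathbb{N}$ with $\delta_v\ge 1$. Expressions $e$ are built from values; closed expressions evaluate to closed values via $[\![e]\!]$. Station code (processes) is given by $P,Q ::= c!\langle e\rangle.P \mid \lfloor ?c(x).P\rfloor Q \mid \sigma.P \mid \tau.P \mid P+Q \mid [b]P,Q \mid X \mid \mathbf{0} \mid \mathrm{fix}\,X.P$, where $b$ is either $e_1=e_2$ or $\mathrm{exp}(c)$, $[b]P,Q$ is a conditional (then-branch $P$, else-branch $Q$), $\lfloor ?c(x).P\rfloor Q$ is a receiver on $c$ with timeout branch $Q$ ($x$ bound in $P$), $\sigma.P$ is a one-unit delay and $\sigma^n.P$ denotes $n$ nested delays. System terms are $W ::= P \mid \lfloor ?c(x).P\rfloor \mid W_1|W_2 \mid \nu c{:}(n,v).W$, where $\lfloor ?c(x).P\rfloor$ is an active receiver ($x$ bound in $P$) and $\nu c{:}(n,v).W$ restricts $c$ with local channel state $(n,v)$. In $\mathrm{fix}\,X.P$ every occurrence of $X$ in $P$ is guarded, i.e. lies within a broadcast prefix, a receiver continuation, a timeout branch, a $\sigma$-prefix, or a branch of a conditional. Terms are identified up to $\alpha$-conversion. A channel environment is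 a map $\Gamma$ from channels to $\mathbb{N}\times$(closed values); write $\Gamma\vdash_t c:n$ and $\Gamma\vdash_v c:w$ when $\Gamma(c)=(n,w)$; $c$ is idle in $\Gamma$ if $\Gamma\vdash_t c:0$ and exposed otherwise; $\Gamma[c\mapsto(n,v)]$ is $\Gamma$ updated at $c$; $\Gamma\le\Gamma'$ iff for every $c$, $\Gamma\vdash_t c:n$ and $\Gamma'\vdash_t c:m$ imply $n\le m$. A configuration $\Gamma\triangleright W$ is a channel environment together with a closed system term (no free data or process variables). Intensional semantics. Actions $\lambda$ are $c!v$, $c?v$, $\sigma$, $\tau$. The environment update $\lambda(\Gamma)$ is: $\sigma(\Gamma)(c)=(\max(n-1,0),w)$ whenever $\Gamma(c)=(n,w)$; $c!v(\Gamma)$ agrees with $\Gamma$ except at $c$, where it is $(\delta_v,v)$ if $c$ is idle in $\Gamma$ and $(\max(\delta_v,n),\mathtt{err})$ if $\Gamma\vdash_t c:n>0$; $c?v(\Gamma)=c!v(\Gamma)$; $\tau(\Gamma)=\Gamma$. The predicate $\mathrm{rcv}(W,c)$ on terms is: true for $\lfloor ?d(x).P\rfloor Q$ iff $d=c$; $\mathrm{rcv}(P+Q,c)=\mathrm{rcv}(P,c)\vee\mathrm{rcv}(Q,c)$; $\mathrm{rcv}(\mathrm{fix}\,X.P,c)=\mathrm{rcv}(P,c)$; $\mathrm{rcv}(W_1|W_2,c)=\mathrm{rcv}(W_1,c)\vee\mathrm{rcv}(W_2,c)$; $\mathrm{rcv}(\nu d{:}(n,v).W,c)=\mathrm{rcv}(W,c)$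 (with $d\neq c$ by $\alpha$-conversion); false for all other forms (broadcasts, $\tau.P$, $\sigma.P$, conditionals, $X$, $\mathbf 0$, active receivers). Then $\mathrm{rcv}(\Gamma\triangleright W,c)$ holds iff $c$ is idle in $\Gamma$ and $\mathrm{rcv}(W,c)$. Transitions $\Gamma\triangleright W\xrightarrow{\lambda}W'$ are the least relation closed under: (Snd) $[\![e]\!]=v$ implies $\Gamma\triangleright c!\langle e\rangle.P\xrightarrow{c!v}\sigma^{\delta_v}.P$; (Rcv) $c$ idle in $\Gamma$ implies $\Gamma\triangleright\lfloor ?c(x).P\rfloor Q\xrightarrow{c?v}\lfloor ?c(x).P\rfloor$; (RcvIgn) $\neg\mathrm{rcv}(\Gamma\triangleright W,c)$ implies $\Gamma\triangleright W\xrightarrow{c?v}W$; (Sync) $\Gamma\triangleright W_1\xrightarrow{c!v}W_1'$ and $\Gamma\triangleright W_2\xrightarrow{c?v}W_2'$ imply $\Gamma\triangleright W_1|W_2\xrightarrow{c!v}W_1'|W_2'$, and symmetrically; (RcvPar) $\Gamma\triangleright W_i\xrightarrow{c?v}W_i'$ for $i=1,2$ imply $\Gamma\triangleright W_1|W_2\xrightarrow{c?v}W_1'|W_2'$; (TimeNil) $\Gamma\triangleright\mathbf 0\xrightarrow{\sigma}\mathbf 0$; (Sleep) $\Gamma\triangleright\sigma.P\xrightarrow{\sigma}P$; (ActRcv) $\Gamma\vdash_t c:n$, $n>1$ imply $\Gamma\triangleright\lfloor ?c(x).P\rfloor\xrightarrow{\sigma}\lfloor ?c(x).P\rfloor$;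 (EndRcv) $\Gamma\vdash_t c:1$, $\Gamma\vdash_v c:w$ imply $\Gamma\triangleright\lfloor ?c(x).P\rfloor\xrightarrow{\sigma}\{w/x\}P$; (Timeout) $c$ idle in $\Gamma$ implies $\Gamma\triangleright\lfloor ?c(x).P\rfloor Q\xrightarrow{\sigma}Q$; (RcvLate) $c$ exposed in $\Gamma$ implies $\Gamma\triangleright\lfloor ?c(x).P\rfloor Q\xrightarrow{\tau}\lfloor ?c(x).\{\mathtt{err}/x\}P\rfloor$; (Tau) $\Gamma\triangleright\tau.P\xrightarrow{\tau}P$; (Then)/(Else) $\Gamma\triangleright[b]P,Q\xrightarrow{\tau}\sigma.P$ if $[\![b]\!]_\Gamma$ is true and $\xrightarrow{\tau}\sigma.Q$ otherwise, where $[\![e_1=e_2]\!]_\Gamma$ is true iff $[\![e_1]\!]=[\![e_2]\!]$ and $[\![\mathrm{exp}(c)]\!]_\Gamma$ is true iff $c$ is exposed in $\Gamma$; (TimePar) $\Gamma\triangleright W_i\xrightarrow{\sigma}W_i'$ for $i=1,2$ imply $\Gamma\triangleright W_1|W_2\xrightarrow{\sigma}W_1'|W_2'$; (TauPar) $\Gamma\triangleright W_1\xrightarrow{\tau}W_1'$ implies $\Gamma\triangleright W_1|W_2\xrightarrow{\tau}W_1'|W_2$, and symmetrically; (Rec) $\Gamma\triangleright\{\mathrm{fix}\,X.P/X\}P\xrightarrow{\lambda}W$ implies $\Gamma\triangleright\mathrm{fix}\,X.P\xrightarrow{\lambda}W$; (Sum) for $\lambda\in\{\tau,c!v\}$, $\Gamma\triangleright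 P\xrightarrow{\lambda}W$ implies $\Gamma\triangleright P+Q\xrightarrow{\lambda}W$, and symmetrically; (SumTime) $\Gamma\triangleright P\xrightarrow{\sigma}P'$, $\Gamma\triangleright Q\xrightarrow{\sigma}Q'$ imply $\Gamma\triangleright P+Q\xrightarrow{\sigma}P'+Q'$; (SumRcv) $\Gamma\triangleright P\xrightarrow{c?v}W$ and $\mathrm{rcv}(\Gamma\triangleright P,c)$ imply $\Gamma\triangleright P+Q\xrightarrow{c?v}W$, and symmetrically; (ResI) $\Gamma[c\mapsto(n,v)]\triangleright W\xrightarrow{c!w}W'$ implies $\Gamma\triangleright\nu c{:}(n,v).W\xrightarrow{\tau}\nu c{:}(c!w(\Gamma[c\mapsto(n,v)]))(c).W'$; (ResV) $\Gamma[c\mapsto(n,v)]\triangleright W\xrightarrow{\lambda}W'$ with $c$ not occurring in $\lambda$ implies $\Gamma\triangleright\nu c{:}(n,v).W\xrightarrow{\lambda}\nu c{:}(\lambda(\Gamma[c\mapsto(n,v)]))(c).W'$. Reductions. $\Gamma\triangleright W\to\Gamma'\triangleright W'$ iff $\Gamma\triangleright W\xrightarrow{\lambda}W'$ for some $\lambda\in\{c!v,\sigma,\tau\}$ and $\Gamma'=\lambda(\Gamma)$; it is instantaneous ($\to_i$) if $\lambda\neq\sigma$ and timed ($\to_\sigma$) if $\lambda=\sigma$. Reduction barbed congruence. $\Gamma\triangleright W\downarrow_c$ iff $c$ is exposed in $\Gamma$; $\mathcal C\Downarrow_c$ iff $\mathcal C\to^*\mathcal C'$ for some $\mathcal C'$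 with $\mathcal C'\downarrow_c$. A relation $\mathcal R$ on configurations is barb preserving if $\mathcal C_1\mathcal R\mathcal C_2$ and $\mathcal C_1\Downarrow_c$ imply $\mathcal C_2\Downarrow_c$; reduction closed if $\mathcal C_1\mathcal R\mathcal C_2$ and $\mathcal C_1\to\mathcal C_1'$ imply $\mathcal C_2\to^*\mathcal C_2'$ for some $\mathcal C_2'$ with $\mathcal C_1'\mathcal R\mathcal C_2'$; contextual if $(\Gamma_1\triangleright W_1)\mathcal R(\Gamma_2\triangleright W_2)$ implies $(\Gamma_1\triangleright W_1|W)\mathcal R(\Gamma_2\triangleright W_2|W)$ for every closed system term $W$. Reduction barbed congruence $\simeq$ is the largest symmetric relation on configurations that is barb preserving, reduction closed and contextual. Well-formedness. The set of well-formed configurations is the least set such that: $\Gamma\triangleright P$ is well-formed for every closed process $P$; $\Gamma\triangleright\lfloor ?c(x).P\rfloor$ is well-formed whenever $c$ is exposed in $\Gamma$; $\Gamma\triangleright W_1|W_2$ is well-formed whenever $\Gamma\triangleright W_1$ and $\Gamma\triangleright W_2$ are; $\Gamma\triangleright\nu c{:}(n,v).W$ is well-formed whenever $\Gamma[c\mapsto(n,v)]\triangleright W$ is. *)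

theory Defs
  imports Main
begin

section \<open>Syntax of CCCP\<close>

datatype 'd cval = Err | Dat 'd

datatype ('x,'d) val = VVar 'x | VCl "'d cval"

text \<open>Expressions are built from values by operators 'f, interpreted by a
  function I :: 'f => 'd cval list => 'd cval.\<close>
datatype ('x,'d,'f) exp = EVal "('x,'d) val" | EOp 'f "('x,'d,'f) exp list"

datatype ('c,'x,'d,'f) bexp = BEq "('x,'d,'f) exp" "('x,'d,'f) exp" | BExp 'c

text \<open>Processes (station code); 'c channels, 'p process variables.\<close>
datatype ('c,'x,'p,'d,'f) proc =
    PSnd 'c "('x,'d,'f) exp" "('c,'x,'p,'d,'f) proc"          (* c!<e>.P *)
  | PRcv 'c 'x "('c,'x,'p,'d,'f) proc" "('c,'x,'p,'d,'f) proc" (* |?c(x).P| Q *)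
  | PSig "('c,'x,'p,'d,'f) proc"
  | PTau "('c,'x,'p,'d,'f) proc"
  | PSum "('c,'x,'p,'d,'f) proc" "('c,'x,'p,'d,'f) proc"
  | PCond "('c,'x,'d,'f) bexp" "('c,'x,'p,'d,'f) proc" "('c,'x,'p,'d,'f) proc" (* [b]P,Q *)
  | PVar 'p
  | PNil
  | PFix 'p "('c,'x,'p,'d,'f) proc"

datatype ('c,'x,'p,'d,'f) sys =
    SP "('c,'x,'p,'d,'f) proc"
  | SAct 'c 'x "('c,'x,'p,'d,'f) proc"                          (* active receiver |?c(x).P| *)
  | SPar "('c,'x,'p,'d,'f) sys" "('c,'x,'p,'d,'f) sys"
  | SNu 'c nat "'d cval" "('c,'x,'p,'d,'f) sys"                 (* nu c:(n,v).W *)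

fun sigpow :: "nat \<Rightarrow> ('c,'x,'p,'d,'f) proc \<Rightarrow> ('c,'x,'p,'d,'f) proc" where
  "sigpow 0 P = P"
| "sigpow (Suc n) P = PSig (sigpow n P)"

fun fvV :: "('x,'d) val \<Rightarrow> 'x set" where
  "fvV (VVar x) = {x}"
| "fvV (VCl v) = {}"

fun fvE :: "('x,'d,'f) exp \<Rightarrow> 'x set" where
  "fvE (EVal v) = fvV v"
| "fvE (EOp f es) = (\<Union>e\<in>set es. fvE e)"

fun fvB :: "('c,'x,'d,'f) bexp \<Rightarrow> 'x set" where
  "fvB (BEq e1 e2) = fvE e1 \<union> fvE e2"
| "fvB (BExp c) = {}"

fun fvdP :: "('c,'x,'p,'d,'f) proc \<Rightarrow> 'x set" where
  "fvdP (PSnd c e P) = fvE e \<union> fvdP P"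
| "fvdP (PRcv c x P Q) = (fvdP P - {x}) \<union> fvdP Q"
| "fvdP (PSig P) = fvdP P"
| "fvdP (PTau P) = fvdP P"
| "fvdP (PSum P Q) = fvdP P \<union> fvdP Q"
| "fvdP (PCond b P Q) = fvB b \<union> fvdP P \<union> fvdP Q"
| "fvdP (PVar X) = {}"
| "fvdP PNil = {}"
| "fvdP (PFix X P) = fvdP P"

fun fvpP :: "('c,'x,'p,'d,'f) proc \<Rightarrow> 'p set" where
  "fvpP (PSnd c e P) = fvpP P"
| "fvpP (PRcv c x P Q) = fvpP P \<union> fvpP Q"
| "fvpP (PSig P) = fvpP P"
| "fvpP (PTau P) = fvpP P"
| "fvpP (PSum P Q) = fvpP P \<union> fvpP Q"
| "fvpP (PCond b P Q) = fvpP P \<union> fvpP Q"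
| "fvpP (PVar X) = {X}"
| "fvpP PNil = {}"
| "fvpP (PFix X P) = fvpP P - {X}"

fun fvdS :: "('c,'x,'p,'d,'f) sys \<Rightarrow> 'x set" where
  "fvdS (SP P) = fvdP P"
| "fvdS (SAct c x P) = fvdP P - {x}"
| "fvdS (SPar W1 W2) = fvdS W1 \<union> fvdS W2"
| "fvdS (SNu c n v W) = fvdS W"

fun fvpS :: "('c,'x,'p,'d,'f) sys \<Rightarrow> 'p set" where
  "fvpS (SP P) = fvpP P"
| "fvpS (SAct c x P) = fvpP P"
| "fvpS (SPar W1 W2) = fvpS W1 \<union> fvpS W2"
| "fvpS (SNu c n v W) = fvpS W"

fun unguarded :: "'p \<Rightarrow> ('c,'x,'p,'d,'f) proc \<Rightarrow> bool" where
  "unguarded X (PVar Y) = (X = Y)"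
| "unguarded X (PSum P Q) = (unguarded X P \<or> unguarded X Q)"
| "unguarded X (PTau P) = unguarded X P"
| "unguarded X (PFix Y P) = (X \<noteq> Y \<and> unguarded X P)"
| "unguarded X _ = False"

fun guardedP :: "('c,'x,'p,'d,'f) proc \<Rightarrow> bool" where
  "guardedP (PSnd c e P) = guardedP P"
| "guardedP (PRcv c x P Q) = (guardedP P \<and> guardedP Q)"
| "guardedP (PSig P) = guardedP P"
| "guardedP (PTau P) = guardedP P"
| "guardedP (PSum P Q) = (guardedP P \<and> guardedP Q)"
| "guardedP (PCond b P Q) = (guardedP P \<and> guardedP Q)"
| "guardedP (PVar X) = True"
| "guardedP PNil = True"
| "guardedP (PFix X P) = (\<not> unguarded X P \<and> guardedP P)"

fun guardedS :: "('c,'x,'p,'d,'f) sys \<Rightarrow> bool" where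
  "guardedS (SP P) = guardedP P"
| "guardedS (SAct c x P) = guardedP P"
| "guardedS (SPar W1 W2) = (guardedS W1 \<and> guardedS W2)"
| "guardedS (SNu c n v W) = guardedS W"

definition closedS :: "('c,'x,'p,'d,'f) sys \<Rightarrow> bool" where
  "closedS W \<longleftrightarrow> fvdS W = {} \<and> fvpS W = {} \<and> guardedS W"

fun substV :: "'x \<Rightarrow> 'd cval \<Rightarrow> ('x,'d) val \<Rightarrow> ('x,'d) val" where
  "substV x w (VVar y) = (if x = y then VCl w else VVar y)"
| "substV x w (VCl v) = VCl v"

fun substE :: "'x \<Rightarrow> 'd cval \<Rightarrow> ('x,'d,'f) exp \<Rightarrow> ('x,'d,'f) exp" where
  "substE x w (EVal v) = EVal (substV x w v)"
| "substE x w (EOp f es) = EOp f (map (substE x w) es)"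

fun substB :: "'x \<Rightarrow> 'd cval \<Rightarrow> ('c,'x,'d,'f) bexp \<Rightarrow> ('c,'x,'d,'f) bexp" where
  "substB x w (BEq e1 e2) = BEq (substE x w e1) (substE x w e2)"
| "substB x w (BExp c) = BExp c"

text \<open>{w/x}P; since w is closed no capture can occur.\<close>
fun substP :: "'x \<Rightarrow> 'd cval \<Rightarrow> ('c,'x,'p,'d,'f) proc \<Rightarrow> ('c,'x,'p,'d,'f) proc" where
  "substP x w (PSnd c e P) = PSnd c (substE x w e) (substP x w P)"
| "substP x w (PRcv c y P Q) = PRcv c y (if y = x then P else substP x w P) (substP x w Q)"
| "substP x w (PSig P) = PSig (substP x w P)"
| "substP x w (PTau P) = PTau (substP x w P)"
| "substP x w (PSum P Q) = PSum (substP x w P) (substP x w Q)"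
| "substP x w (PCond b P Q) = PCond (substB x w b) (substP x w P) (substP x w Q)"
| "substP x w (PVar X) = PVar X"
| "substP x w PNil = PNil"
| "substP x w (PFix X P) = PFix X (substP x w P)"

text \<open>{R/X}P; used only with R closed, so no capture can occur.\<close>
fun substX :: "'p \<Rightarrow> ('c,'x,'p,'d,'f) proc \<Rightarrow> ('c,'x,'p,'d,'f) proc \<Rightarrow> ('c,'x,'p,'d,'f) proc" where
  "substX X R (PSnd c e P) = PSnd c e (substX X R P)"
| "substX X R (PRcv c y P Q) = PRcv c y (substX X R P) (substX X R Q)"
| "substX X R (PSig P) = PSig (substX X R P)"
| "substX X R (PTau P) = PTau (substX X R P)"
| "substX X R (PSum P Q) = PSum (substX X R P) (substX X R Q)"
| "substX X R (PCond b P Q) = PCond b (substX X R P) (substX X R Q)"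
| "substX X R (PVar Y) = (if X = Y then R else PVar Y)"
| "substX X R PNil = PNil"
| "substX X R (PFix Y P) = (if X = Y then PFix Y P else PFix Y (substX X R P))"

type_synonym ('c,'d) env = "'c \<Rightarrow> nat \<times> 'd cval"

fun evalE :: "('f \<Rightarrow> 'd cval list \<Rightarrow> 'd cval) \<Rightarrow> ('x,'d,'f) exp \<Rightarrow> 'd cval option" where
  "evalE I (EVal (VCl v)) = Some v"
| "evalE I (EVal (VVar x)) = None"
| "evalE I (EOp f es) =
     (if (\<forall>e\<in>set es. evalE I e \<noteq> None) then Some (I f (map (\<lambda>e. the (evalE I e)) es)) else None)"

definition idle :: "('c,'d) env \<Rightarrow> 'c \<Rightarrow> bool" where
  "idle \<Gamma> c \<longleftrightarrow> fst (\<Gamma> c) = 0"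

definition exposed :: "('c,'d) env \<Rightarrow> 'c \<Rightarrow> bool" where
  "exposed \<Gamma> c \<longleftrightarrow> fst (\<Gamma> c) \<noteq> 0"

fun evalB :: "('f \<Rightarrow> 'd cval list \<Rightarrow> 'd cval) \<Rightarrow> ('c,'d) env \<Rightarrow> ('c,'x,'d,'f) bexp \<Rightarrow> bool" where
  "evalB I \<Gamma> (BEq e1 e2) = (evalE I e1 = evalE I e2)"
| "evalB I \<Gamma> (BExp c) = exposed \<Gamma> c"

datatype ('c,'d) act = AOut 'c "'d cval" | AIn 'c "'d cval" | ASig | ATau

fun chans :: "('c,'d) act \<Rightarrow> 'c set" where
  "chans (AOut c v) = {c}"
| "chans (AIn c v) = {c}"
| "chans ASig = {}"
| "chans ATau = {}"

definition sndUpd :: "('d cval \<Rightarrow> nat) \<Rightarrow> 'c \<Rightarrow> 'd cval \<Rightarrow> ('c,'d) env \<Rightarrow> ('c,'d) env" where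
  "sndUpd \<delta> c v \<Gamma> = \<Gamma>(c := (if idle \<Gamma> c then (\<delta> v, v) else (max (\<delta> v) (fst (\<Gamma> c)), Err)))"

fun updA :: "('d cval \<Rightarrow> nat) \<Rightarrow> ('c,'d) act \<Rightarrow> ('c,'d) env \<Rightarrow> ('c,'d) env" where
  "updA \<delta> ASig \<Gamma> = (\<lambda>c. (fst (\<Gamma> c) - 1, snd (\<Gamma> c)))"
| "updA \<delta> (AOut c v) \<Gamma> = sndUpd \<delta> c v \<Gamma>"
| "updA \<delta> (AIn c v) \<Gamma> = sndUpd \<delta> c v \<Gamma>"
| "updA \<delta> ATau \<Gamma> = \<Gamma>"

fun rcvP :: "('c,'x,'p,'d,'f) proc \<Rightarrow> 'c \<Rightarrow> bool" where
  "rcvP (PRcv d x P Q) c = (d = c)"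
| "rcvP (PSum P Q) c = (rcvP P c \<or> rcvP Q c)"
| "rcvP (PFix X P) c = rcvP P c"
| "rcvP _ c = False"

text \<open>For nu d with d = c the bound channel is renamed apart (alpha-conversion),
  so the outer c cannot be received on inside.\<close>
fun rcvS :: "('c,'x,'p,'d,'f) sys \<Rightarrow> 'c \<Rightarrow> bool" where
  "rcvS (SP P) c = rcvP P c"
| "rcvS (SAct d x P) c = False"
| "rcvS (SPar W1 W2) c = (rcvS W1 c \<or> rcvS W2 c)"
| "rcvS (SNu d n v W) c = (d \<noteq> c \<and> rcvS W c)"

definition rcvC :: "('c,'d) env \<Rightarrow> ('c,'x,'p,'d,'f) sys \<Rightarrow> 'c \<Rightarrow> bool" where
  "rcvC \<Gamma> W c \<longleftrightarrow> idle \<Gamma> c \<and> rcvS W c"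

section \<open>Intensional semantics\<close>

inductive trans :: "('f \<Rightarrow> 'd cval list \<Rightarrow> 'd cval) \<Rightarrow> ('d cval \<Rightarrow> nat) \<Rightarrow> ('c,'d) env
    \<Rightarrow> ('c,'x,'p,'d,'f) sys \<Rightarrow> ('c,'d) act \<Rightarrow> ('c,'x,'p,'d,'f) sys \<Rightarrow> bool"
  for I :: "'f \<Rightarrow> 'd cval list \<Rightarrow> 'd cval" and \<delta> :: "'d cval \<Rightarrow> nat" where
  Snd: "evalE I e = Some v \<Longrightarrow> trans I \<delta> \<Gamma> (SP (PSnd c e P)) (AOut c v) (SP (sigpow (\<delta> v) P))"
| Rcv: "idle \<Gamma> c \<Longrightarrow> trans I \<delta> \<Gamma> (SP (PRcv c x P Q)) (AIn c v) (SAct c x P)"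
| RcvIgn: "\<not> rcvC \<Gamma> W c \<Longrightarrow> trans I \<delta> \<Gamma> W (AIn c v) W"
| Sync1: "trans I \<delta> \<Gamma> W1 (AOut c v) W1' \<Longrightarrow> trans I \<delta> \<Gamma> W2 (AIn c v) W2'
          \<Longrightarrow> trans I \<delta> \<Gamma> (SPar W1 W2) (AOut c v) (SPar W1' W2')"
| Sync2: "trans I \<delta> \<Gamma> W1 (AIn c v) W1' \<Longrightarrow> trans I \<delta> \<Gamma> W2 (AOut c v) W2'
          \<Longrightarrow> trans I \<delta> \<Gamma> (SPar W1 W2) (AOut c v) (SPar W1' W2')"
| RcvPar: "trans I \<delta> \<Gamma> W1 (AIn c v) W1' \<Longrightarrow> trans I \<delta> \<Gamma> W2 (AIn c v) W2'
          \<Longrightarrow> trans I \<delta> \<Gamma> (SPar W1 W2) (AIn c v) (SPar W1' W2')"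
| TimeNil: "trans I \<delta> \<Gamma> (SP PNil) ASig (SP PNil)"
| Sleep: "trans I \<delta> \<Gamma> (SP (PSig P)) ASig (SP P)"
| ActRcv: "fst (\<Gamma> c) > 1 \<Longrightarrow> trans I \<delta> \<Gamma> (SAct c x P) ASig (SAct c x P)"
| EndRcv: "\<Gamma> c = (1, w) \<Longrightarrow> trans I \<delta> \<Gamma> (SAct c x P) ASig (SP (substP x w P))"
| Timeout: "idle \<Gamma> c \<Longrightarrow> trans I \<delta> \<Gamma> (SP (PRcv c x P Q)) ASig (SP Q)"
| RcvLate: "exposed \<Gamma> c \<Longrightarrow> trans I \<delta> \<Gamma> (SP (PRcv c x P Q)) ATau (SAct c x (substP x Err P))"
| Tau: "trans I \<delta> \<Gamma> (SP (PTau P)) ATau (SP P)"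
| Then: "evalB I \<Gamma> b \<Longrightarrow> trans I \<delta> \<Gamma> (SP (PCond b P Q)) ATau (SP (PSig P))"
| Else: "\<not> evalB I \<Gamma> b \<Longrightarrow> trans I \<delta> \<Gamma> (SP (PCond b P Q)) ATau (SP (PSig Q))"
| TimePar: "trans I \<delta> \<Gamma> W1 ASig W1' \<Longrightarrow> trans I \<delta> \<Gamma> W2 ASig W2'
          \<Longrightarrow> trans I \<delta> \<Gamma> (SPar W1 W2) ASig (SPar W1' W2')"
| TauPar1: "trans I \<delta> \<Gamma> W1 ATau W1' \<Longrightarrow> trans I \<delta> \<Gamma> (SPar W1 W2) ATau (SPar W1' W2)"
| TauPar2: "trans I \<delta> \<Gamma> W2 ATau W2' \<Longrightarrow> trans I \<delta> \<Gamma> (SPar W1 W2) ATau (SPar W1 W2')"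
| Rec: "trans I \<delta> \<Gamma> (SP (substX X (PFix X P) P)) l W \<Longrightarrow> trans I \<delta> \<Gamma> (SP (PFix X P)) l W"
| Sum1: "trans I \<delta> \<Gamma> (SP P) l W \<Longrightarrow> l = ATau \<or> (\<exists>c v. l = AOut c v)
          \<Longrightarrow> trans I \<delta> \<Gamma> (SP (PSum P Q)) l W"
| Sum2: "trans I \<delta> \<Gamma> (SP Q) l W \<Longrightarrow> l = ATau \<or> (\<exists>c v. l = AOut c v)
          \<Longrightarrow> trans I \<delta> \<Gamma> (SP (PSum P Q)) l W"
| SumTime: "trans I \<delta> \<Gamma> (SP P) ASig (SP P') \<Longrightarrow> trans I \<delta> \<Gamma> (SP Q) ASig (SP Q')
          \<Longrightarrow> trans I \<delta> \<Gamma> (SP (PSum P Q)) ASig (SP (PSum P' Q'))"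
| SumRcv1: "trans I \<delta> \<Gamma> (SP P) (AIn c v) W \<Longrightarrow> rcvC \<Gamma> (SP P) c
          \<Longrightarrow> trans I \<delta> \<Gamma> (SP (PSum P Q)) (AIn c v) W"
| SumRcv2: "trans I \<delta> \<Gamma> (SP Q) (AIn c v) W \<Longrightarrow> rcvC \<Gamma> (SP Q) c
          \<Longrightarrow> trans I \<delta> \<Gamma> (SP (PSum P Q)) (AIn c v) W"
| ResI: "trans I \<delta> (\<Gamma>(c := (n, v))) W (AOut c w) W'
          \<Longrightarrow> trans I \<delta> \<Gamma> (SNu c n v W) ATau
                (SNu c (fst (updA \<delta> (AOut c w) (\<Gamma>(c := (n, v))) c))
                       (snd (updA \<delta> (AOut c w) (\<Gamma>(c := (n, v))) c)) W')"
| ResV: "trans I \<delta> (\<Gamma>(c := (n, v))) W l W' \<Longrightarrow> c \<notin> chans l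
          \<Longrightarrow> trans I \<delta> \<Gamma> (SNu c n v W) l
                (SNu c (fst (updA \<delta> l (\<Gamma>(c := (n, v))) c))
                       (snd (updA \<delta> l (\<Gamma>(c := (n, v))) c)) W')"

section \<open>Reductions and reduction barbed congruence\<close>

type_synonym ('c,'x,'p,'d,'f) config = "('c,'d) env \<times> ('c,'x,'p,'d,'f) sys"

definition red :: "('f \<Rightarrow> 'd cval list \<Rightarrow> 'd cval) \<Rightarrow> ('d cval \<Rightarrow> nat)
    \<Rightarrow> ('c,'x,'p,'d,'f) config \<Rightarrow> ('c,'x,'p,'d,'f) config \<Rightarrow> bool" where
  "red I \<delta> C C' \<longleftrightarrow> (\<exists>l. (\<forall>c v. l \<noteq> AIn c v) \<and> trans I \<delta> (fst C) (snd C) l (snd C')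
                         \<and> fst C' = updA \<delta> l (fst C))"

definition configuration :: "('c,'x,'p,'d,'f) config \<Rightarrow> bool" where
  "configuration C \<longleftrightarrow> closedS (snd C)"

definition barb :: "('c,'x,'p,'d,'f) config \<Rightarrow> 'c \<Rightarrow> bool" where
  "barb C c \<longleftrightarrow> exposed (fst C) c"

definition wbarb :: "('f \<Rightarrow> 'd cval list \<Rightarrow> 'd cval) \<Rightarrow> ('d cval \<Rightarrow> nat)
    \<Rightarrow> ('c,'x,'p,'d,'f) config \<Rightarrow> 'c \<Rightarrow> bool" where
  "wbarb I \<delta> C c \<longleftrightarrow> (\<exists>C'. (red I \<delta>)\<^sup>*\<^sup>* C C' \<and> barb C' c)"

definition barb_preserving where
  "barb_preserving I \<delta> R \<longleftrightarrow> (\<forall>C1 C2 c. R C1 C2 \<longrightarrow> wbarb I \<delta> C1 c \<longrightarrow> wbarb I \<delta> C2 c)"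

definition reduction_closed where
  "reduction_closed I \<delta> R \<longleftrightarrow>
     (\<forall>C1 C2 C1'. R C1 C2 \<longrightarrow> red I \<delta> C1 C1' \<longrightarrow> (\<exists>C2'. (red I \<delta>)\<^sup>*\<^sup>* C2 C2' \<and> R C1' C2'))"

definition contextual :: "(('c,'x,'p,'d,'f) config \<Rightarrow> ('c,'x,'p,'d,'f) config \<Rightarrow> bool) \<Rightarrow> bool" where
  "contextual R \<longleftrightarrow>
     (\<forall>G1 W1 G2 W2 W. R (G1, W1) (G2, W2) \<longrightarrow> closedS W \<longrightarrow> R (G1, SPar W1 W) (G2, SPar W2 W))"

text \<open>Reduction barbed congruence: the largest symmetric, barb preserving,
  reduction closed and contextual relation on configurations, i.e. the union
  of all such relations.\<close>
definition rbc :: "('f \<Rightarrow> 'd cval list \<Rightarrow> 'd cval) \<Rightarrow> ('d cval \<Rightarrow> nat)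
    \<Rightarrow> ('c,'x,'p,'d,'f) config \<Rightarrow> ('c,'x,'p,'d,'f) config \<Rightarrow> bool" where
  "rbc I \<delta> C1 C2 \<longleftrightarrow>
     (\<exists>R. (\<forall>A B. R A B \<longrightarrow> configuration A \<and> configuration B)
        \<and> symp R \<and> barb_preserving I \<delta> R \<and> reduction_closed I \<delta> R \<and> contextual R
        \<and> R C1 C2)"

inductive wf :: "('c,'d) env \<Rightarrow> ('c,'x,'p,'d,'f) sys \<Rightarrow> bool" where
  wfP: "closedS (SP P) \<Longrightarrow> wf \<Gamma> (SP P)"
| wfAct: "exposed \<Gamma> c \<Longrightarrow> wf \<Gamma> (SAct c x P)"
| wfPar: "wf \<Gamma> W1 \<Longrightarrow> wf \<Gamma> W2 \<Longrightarrow> wf \<Gamma> (SPar W1 W2)"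
| wfNu: "wf (\<Gamma>(c := (n, v))) W \<Longrightarrow> wf \<Gamma> (SNu c n v W)"

end

theory Submission imports Defs begin

fun chB :: "('c,'x,'d,'f) bexp \<Rightarrow> 'c set" where
  "chB (BEq e1 e2) = {}" | "chB (BExp c) = {c}"

fun chP :: "('c,'x,'p,'d,'f) proc \<Rightarrow> 'c set" where
  "chP (PSnd c e P) = insert c (chP P)"
| "chP (PRcv c x P Q) = insert c (chP P \<union> chP Q)"
| "chP (PSig P) = chP P"
| "chP (PTau P) = chP P"
| "chP (PSum P Q) = chP P \<union> chP Q"
| "chP (PCond b P Q) = chB b \<union> chP P \<union> chP Q"
| "chP (PVar X) = {}"
| "chP PNil = {}"
| "chP (PFix X P) = chP P"

fun chS :: "('c,'x,'p,'d,'f) sys \<Rightarrow> 'c set" where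
  "chS (SP P) = chP P"
| "chS (SAct c x P) = insert c (chP P)"
| "chS (SPar W1 W2) = chS W1 \<union> chS W2"
| "chS (SNu c n v W) = insert c (chS W)"

fun hw :: "('c,'x,'p,'d,'f) proc \<Rightarrow> nat" where
  "hw (PSnd c e P) = 1"
| "hw (PRcv c x P Q) = 1"
| "hw (PSig P) = 0"
| "hw (PTau P) = Suc (hw P)"
| "hw (PSum P Q) = hw P + hw Q"
| "hw (PCond b P Q) = 1"
| "hw (PVar X) = 0"
| "hw PNil = 0"
| "hw (PFix X P) = hw P"

fun hs :: "('c,'x,'p,'d,'f) proc \<Rightarrow> nat" where
  "hs (PTau P) = Suc (hs P)"
| "hs (PSum P Q) = Suc (hs P + hs Q)"
| "hs (PFix X P) = Suc (hs P)"
| "hs _ = 1"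

fun sw :: "('c,'x,'p,'d,'f) sys \<Rightarrow> nat" where
  "sw (SP P) = hw P"
| "sw (SAct c x P) = 0"
| "sw (SPar W1 W2) = sw W1 + sw W2"
| "sw (SNu c n v W) = sw W"

fun okS :: "('c,'x,'p,'d,'f) sys \<Rightarrow> bool" where
  "okS (SP P) = (guardedP P \<and> fvpP P = {})"
| "okS (SAct c x P) = True"
| "okS (SPar W1 W2) = (okS W1 \<and> okS W2)"
| "okS (SNu c n v W) = okS W"

lemma chB_substB[simp]: "chB (substB x w b) = chB b" by (cases b) auto
lemma chP_substP[simp]: "chP (substP x w P) = chP P" by (induction P) auto
lemma chP_substX: "chP (substX X R P) \<subseteq> chP P \<union> chP R" by (induction P) auto
lemma chP_sigpow[simp]: "chP (sigpow n P) = chP P" by (induction n) auto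
lemma finite_chB: "finite (chB b)" by (cases b) auto
lemma finite_chP: "finite (chP P)" by (induction P) (auto simp: finite_chB)
lemma finite_chS: "finite (chS W)" by (induction W) (auto simp: finite_chP)

lemma hw_substX: "\<not> unguarded X P \<Longrightarrow> hw (substX X R P) = hw P"
  by (induction P) auto
lemma hs_substX: "\<not> unguarded X P \<Longrightarrow> hs (substX X R P) = hs P"
  by (induction P) auto
lemma hw_sigpow: "n \<ge> 1 \<Longrightarrow> hw (sigpow n P) = 0" by (cases n) auto

lemma fvV_substV: "fvV (substV x w v) \<subseteq> fvV v - {x}"
  by (cases v) auto
lemma fvE_substE: "fvE (substE x w e) \<subseteq> fvE e - {x}"
proof (induction e)
  case (EVal v) then show ?case using fvV_substV by simp
next
  case (EOp f es)
  show ?case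
  proof
    fix y assume "y \<in> fvE (substE x w (EOp f es))"
    then obtain e where e: "e \<in> set es" "y \<in> fvE (substE x w e)" by auto
    then have "y \<in> fvE e - {x}" using EOp.IH by blast
    then show "y \<in> fvE (EOp f es) - {x}" using e(1) by auto
  qed
qed
lemma fvB_substB: "fvB (substB x w b) \<subseteq> fvB b - {x}"
proof (cases b)
  case (BEq e1 e2) then show ?thesis using fvE_substE[of x w e1] fvE_substE[of x w e2] by auto
qed simp
lemma fvdP_substP: "fvdP (substP x w P) \<subseteq> fvdP P - {x}"
proof (induction P)
  case (PSnd c e P) then show ?case using fvE_substE[of x w e] by auto
next
  case (PCond b P Q) then show ?case using fvB_substB[of x w b] by auto
qed auto
lemma fvpP_substP[simp]: "fvpP (substP x w P) = fvpP P" by (induction P) auto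
lemma ug_substP[simp]: "unguarded Y (substP x w P) = unguarded Y P" by (induction P) auto
lemma guardedP_substP[simp]: "guardedP (substP x w P) = guardedP P" by (induction P) auto
lemma fvdP_substX: "fvdP (substX X R P) \<subseteq> fvdP P \<union> fvdP R" by (induction P) auto
lemma fvpP_substX: "fvpP (substX X R P) \<subseteq> (fvpP P - {X}) \<union> fvpP R" by (induction P) auto
lemma ug_fvp: "unguarded Y P \<Longrightarrow> Y \<in> fvpP P" by (induction P) auto
lemma ug_substX: "unguarded Y (substX X R P) \<Longrightarrow> unguarded Y P \<or> unguarded Y R"
  by (induction P) (auto split: if_splits)
lemma guarded_substX: "guardedP P \<Longrightarrow> guardedP R \<Longrightarrow> fvpP R = {} \<Longrightarrow> guardedP (substX X R P)"
proof (induction P)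
  case (PFix Y P)
  then show ?case using ug_substX[of Y X R P] ug_fvp[of Y R] by auto
qed auto
lemma sigpow_fvd[simp]: "fvdP (sigpow n P) = fvdP P" by (induction n) auto
lemma sigpow_fvp[simp]: "fvpP (sigpow n P) = fvpP P" by (induction n) auto
lemma sigpow_g[simp]: "guardedP (sigpow n P) = guardedP P" by (induction n) auto
lemma evalE_closed: "fvE e = {} \<Longrightarrow> evalE I e \<noteq> None"
proof (induction e)
  case (EVal v) then show ?case by (cases v) auto
next
  case (EOp f es)
  have "\<forall>e\<in>set es. evalE I e \<noteq> None"
  proof
    fix e assume e: "e \<in> set es"
    then have "fvE e = {}" using EOp.prems by auto
    then show "evalE I e \<noteq> None" using EOp.IH e by blast
  qed
  then show ?case by simp
qed

lemma unfold_closed: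
  assumes "closedS (SP (PFix X P))"
  shows "closedS (SP (substX X (PFix X P) P))"
  using assms fvdP_substX[of X "PFix X P" P] fvpP_substX[of X "PFix X P" P]
    guarded_substX[of P "PFix X P" X]
  by (auto simp: closedS_def)
lemma unfold_ok:
  assumes "okS (SP (PFix X P))"
  shows "okS (SP (substX X (PFix X P) P))"
  using assms fvpP_substX[of X "PFix X P" P]
    guarded_substX[of P "PFix X P" X]
  by auto



inductive_cases wfParE: "wf \<Gamma> (SPar W1 W2)"
inductive_cases wfNuE: "wf \<Gamma> (SNu c n v W)"
inductive_cases wfActE: "wf \<Gamma> (SAct c x P)"
inductive_cases wfPE: "wf \<Gamma> (SP P)"

lemma wf_mono: "wf \<Gamma> W \<Longrightarrow> (\<forall>c. exposed \<Gamma> c \<longrightarrow> exposed \<Gamma>' c) \<Longrightarrow> wf \<Gamma>' W"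
proof (induction W arbitrary: \<Gamma> \<Gamma>')
  case (SP P) then show ?case by (auto elim: wfPE intro: wf.intros)
next
  case (SAct c x P) then show ?case by (auto elim: wfActE intro: wf.intros)
next
  case (SPar W1 W2)
  then have "wf \<Gamma>' W1" "wf \<Gamma>' W2" by (auto elim: wfParE)
  then show ?case by (rule wf.wfPar)
next
  case (SNu c n v W)
  have "\<forall>d. exposed (\<Gamma>(c := (n, v))) d \<longrightarrow> exposed (\<Gamma>'(c := (n, v))) d"
    using SNu.prems by (auto simp: exposed_def)
  moreover have "wf (\<Gamma>(c := (n, v))) W" using SNu.prems by (auto elim: wfNuE)
  ultimately have "wf (\<Gamma>'(c := (n, v))) W" using SNu.IH by blast
  then show ?case by (rule wf.wfNu)
qed

lemma sndUpd_mono: "exposed \<Gamma> d \<Longrightarrow> exposed (sndUpd \<delta> c v \<Gamma>) d"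
  by (auto simp: sndUpd_def exposed_def idle_def)

lemma sndUpd_exp: assumes "\<forall>v. \<delta> v \<ge> 1" shows "exposed (sndUpd \<delta> c v \<Gamma>) c"
proof -
  have "\<delta> v \<ge> 1" using assms by blast
  then show ?thesis by (auto simp: sndUpd_def exposed_def idle_def)
qed

lemma updA_commute: "c \<notin> chans l \<Longrightarrow>
  (updA \<delta> l \<Gamma>)(c := updA \<delta> l (\<Gamma>(c := (n, v))) c) = updA \<delta> l (\<Gamma>(c := (n, v)))"
  by (cases l) (auto simp: sndUpd_def idle_def fun_eq_iff)

lemma updA_out_self: "(\<Gamma>(c := updA \<delta> (AOut c w) (\<Gamma>(c := (n, v))) c)) = updA \<delta> (AOut c w) (\<Gamma>(c := (n, v)))"
  by (auto simp: sndUpd_def fun_eq_iff)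


lemma closedS_Par[simp]: "closedS (SPar W1 W2) = (closedS W1 \<and> closedS W2)"
  by (auto simp: closedS_def)
lemma closedS_Nu[simp]: "closedS (SNu c n v W) = closedS W"
  by (auto simp: closedS_def)

lemma Pres:
  assumes "trans I \<delta> \<Gamma> W l W'" "\<forall>v. \<delta> v \<ge> 1"
  shows "wf \<Gamma> W \<Longrightarrow> closedS W \<Longrightarrow> wf (updA \<delta> l \<Gamma>) W' \<and> closedS W'"
  using assms(1)
proof (induction rule: trans.induct)
  case (Snd e v \<Gamma> c P)
  then show ?case by (auto simp: closedS_def intro!: wf.intros)
next
  case (Rcv \<Gamma> c x P Q v)
  then show ?case using sndUpd_exp[OF assms(2)]
    by (auto simp: closedS_def intro!: wf.intros)
next
  case (RcvIgn \<Gamma> W c v)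
  have "wf (sndUpd \<delta> c v \<Gamma>) W" using RcvIgn.prems(1) by (rule wf_mono) (auto intro: sndUpd_mono)
  then show ?case using RcvIgn by simp
next
  case (Sync1 \<Gamma> W1 c v W1' W2 W2')
  from Sync1.prems have "wf \<Gamma> W1" "wf \<Gamma> W2" "closedS W1" "closedS W2" by (auto elim: wfParE)
  then have "wf (updA \<delta> (AOut c v) \<Gamma>) W1' \<and> closedS W1'" "wf (updA \<delta> (AIn c v) \<Gamma>) W2' \<and> closedS W2'"
    using Sync1.IH by blast+
  then show ?case by (simp add: wf.wfPar)
next
  case (Sync2 \<Gamma> W1 c v W1' W2 W2')
  from Sync2.prems have "wf \<Gamma> W1" "wf \<Gamma> W2" "closedS W1" "closedS W2" by (auto elim: wfParE)
  then have "wf (updA \<delta> (AIn c v) \<Gamma>) W1' \<and> closedS W1'" "wf (updA \<delta> (AOut c v) \<Gamma>) W2' \<and> closedS W2'"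
    using Sync2.IH by blast+
  then show ?case by (simp add: wf.wfPar)
next
  case (RcvPar \<Gamma> W1 c v W1' W2 W2')
  from RcvPar.prems have "wf \<Gamma> W1" "wf \<Gamma> W2" "closedS W1" "closedS W2" by (auto elim: wfParE)
  then have "wf (updA \<delta> (AIn c v) \<Gamma>) W1' \<and> closedS W1'" "wf (updA \<delta> (AIn c v) \<Gamma>) W2' \<and> closedS W2'"
    using RcvPar.IH by blast+
  then show ?case by (simp add: wf.wfPar)
next
  case (TimeNil \<Gamma>)
  then show ?case by (auto simp: closedS_def intro!: wf.intros)
next
  case (Sleep \<Gamma> P)
  then show ?case by (auto simp: closedS_def intro!: wf.intros)
next
  case (ActRcv \<Gamma> c x P)
  then show ?case by (auto simp: closedS_def exposed_def intro!: wf.intros)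
next
  case (EndRcv \<Gamma> c w x P)
  have "fvdP (substP x w P) = {}" using EndRcv.prems fvdP_substP[of x w P] by (simp add: closedS_def) blast
  then show ?case using EndRcv by (auto simp: closedS_def intro!: wf.intros)
next
  case (Timeout \<Gamma> c x P Q)
  then show ?case by (auto simp: closedS_def intro!: wf.intros)
next
  case (RcvLate \<Gamma> c x P Q)
  have "fvdP (substP x Err P) = {}" using RcvLate.prems fvdP_substP[of x Err P] by (simp add: closedS_def) blast
  then show ?case using RcvLate by (auto simp: closedS_def intro!: wf.intros)
next
  case (Tau \<Gamma> P)
  then show ?case by (auto simp: closedS_def intro!: wf.intros)
next
  case (Then \<Gamma> b P Q)
  then show ?case by (auto simp: closedS_def intro!: wf.intros)
next
  case (Else \<Gamma> b P Q)
  then show ?case by (auto simp: closedS_def intro!: wf.intros)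
next
  case (TimePar \<Gamma> W1 W1' W2 W2')
  from TimePar.prems have "wf \<Gamma> W1" "wf \<Gamma> W2" "closedS W1" "closedS W2" by (auto elim: wfParE)
  then have "wf (updA \<delta> ASig \<Gamma>) W1' \<and> closedS W1'" "wf (updA \<delta> ASig \<Gamma>) W2' \<and> closedS W2'"
    using TimePar.IH by blast+
  then show ?case by (simp add: wf.wfPar)
next
  case (TauPar1 \<Gamma> W1 W1' W2)
  from TauPar1.prems have "wf \<Gamma> W1" "wf \<Gamma> W2" "closedS W1" "closedS W2" by (auto elim: wfParE)
  then have "wf (updA \<delta> ATau \<Gamma>) W1' \<and> closedS W1'"
    using TauPar1.IH by blast
  then show ?case using \<open>wf \<Gamma> W2\<close> \<open>closedS W2\<close> by (simp add: wf.wfPar)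
next
  case (TauPar2 \<Gamma> W2 W2' W1)
  from TauPar2.prems have "wf \<Gamma> W1" "wf \<Gamma> W2" "closedS W1" "closedS W2" by (auto elim: wfParE)
  then have "wf (updA \<delta> ATau \<Gamma>) W2' \<and> closedS W2'"
    using TauPar2.IH by blast
  then show ?case using \<open>wf \<Gamma> W1\<close> \<open>closedS W1\<close> by (simp add: wf.wfPar)
next
  case (Rec \<Gamma> X P l W)
  have "closedS (SP (substX X (PFix X P) P))" using unfold_closed[of X P] Rec.prems by blast
  then have "wf \<Gamma> (SP (substX X (PFix X P) P))" by (rule wf.wfP)
  then show ?case using Rec.IH \<open>closedS (SP (substX X (PFix X P) P))\<close> by blast
next
  case (Sum1 \<Gamma> P l W Q)
  have "closedS (SP P)" using Sum1.prems by (auto simp: closedS_def)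
  then have "wf \<Gamma> (SP P)" by (rule wf.wfP)
  with Sum1.IH \<open>closedS (SP P)\<close> show ?case by blast
next
  case (Sum2 \<Gamma> Q l W P)
  have "closedS (SP Q)" using Sum2.prems by (auto simp: closedS_def)
  then have "wf \<Gamma> (SP Q)" by (rule wf.wfP)
  with Sum2.IH \<open>closedS (SP Q)\<close> show ?case by blast
next
  case (SumTime \<Gamma> P P' Q Q')
  have "closedS (SP P)" "closedS (SP Q)" using SumTime.prems by (auto simp: closedS_def)
  then have "wf \<Gamma> (SP P)" "wf \<Gamma> (SP Q)" by (auto intro: wf.wfP)
  then have "closedS (SP P')" "closedS (SP Q')" using SumTime.IH \<open>closedS (SP P)\<close> \<open>closedS (SP Q)\<close> by blast+
  then have "closedS (SP (PSum P' Q'))" by (simp add: closedS_def)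
  then show ?case by (simp add: wf.wfP)
next
  case (SumRcv1 \<Gamma> P c v W Q)
  have "closedS (SP P)" using SumRcv1.prems by (auto simp: closedS_def)
  then have "wf \<Gamma> (SP P)" by (rule wf.wfP)
  with SumRcv1.IH \<open>closedS (SP P)\<close> show ?case by blast
next
  case (SumRcv2 \<Gamma> Q c v W P)
  have "closedS (SP Q)" using SumRcv2.prems by (auto simp: closedS_def)
  then have "wf \<Gamma> (SP Q)" by (rule wf.wfP)
  with SumRcv2.IH \<open>closedS (SP Q)\<close> show ?case by blast
next
  case (ResI \<Gamma> c n v W w W')
  have "wf (\<Gamma>(c := (n, v))) W" using ResI.prems by (auto elim: wfNuE)
  moreover have "closedS W" using ResI.prems by simp
  ultimately have "wf (updA \<delta> (AOut c w) (\<Gamma>(c := (n, v)))) W' \<and> closedS W'" using ResI.IH by blast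
  moreover have "\<Gamma>(c := (fst (updA \<delta> (AOut c w) (\<Gamma>(c := (n, v))) c), snd (updA \<delta> (AOut c w) (\<Gamma>(c := (n, v))) c)))
     = updA \<delta> (AOut c w) (\<Gamma>(c := (n, v)))" unfolding prod.collapse by (rule updA_out_self)
  ultimately show ?case using wf.wfNu by (metis closedS_Nu updA.simps(4))
next
  case (ResV \<Gamma> c n v W l W')
  have "wf (\<Gamma>(c := (n, v))) W" using ResV.prems by (auto elim: wfNuE)
  moreover have "closedS W" using ResV.prems by simp
  ultimately have "wf (updA \<delta> l (\<Gamma>(c := (n, v)))) W' \<and> closedS W'" using ResV.IH by blast
  moreover have "(updA \<delta> l \<Gamma>)(c := (fst (updA \<delta> l (\<Gamma>(c := (n, v))) c), snd (updA \<delta> l (\<Gamma>(c := (n, v))) c)))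
     = updA \<delta> l (\<Gamma>(c := (n, v)))" unfolding prod.collapse by (rule updA_commute[OF ResV.hyps(2)])
  ultimately show ?case using wf.wfNu by (metis closedS_Nu)
qed

definition inst :: "('c,'d) act \<Rightarrow> bool" where
  "inst l \<longleftrightarrow> l = ATau \<or> (\<exists>e w. l = AOut e w)"

lemma Dec:
  assumes "trans I \<delta> \<Gamma> W l W'" "\<forall>v. \<delta> v \<ge> 1"
  shows "okS W \<Longrightarrow> (inst l \<longrightarrow> sw W' < sw W) \<and> (\<forall>c v. l = AIn c v \<longrightarrow> sw W' \<le> sw W)"
  using assms(1)
proof (induction rule: trans.induct)
  case (Snd e v \<Gamma> c P)
  have "\<delta> v \<ge> 1" using assms(2) by blast
  then show ?case by (simp add: hw_sigpow)
next
  case (Rec \<Gamma> X P l W)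
  have "\<not> unguarded X P" using Rec.prems by simp
  then have "hw (substX X (PFix X P) P) = hw P" by (rule hw_substX)
  then show ?case using Rec.IH unfold_ok[OF Rec.prems] by simp
next
  case (Sum1 \<Gamma> P l W Q)
  then show ?case by (auto simp: inst_def)
next
  case (Sum2 \<Gamma> Q l W P)
  then show ?case by (auto simp: inst_def)
next
  case (SumRcv1 \<Gamma> P c v W Q)
  then show ?case by (auto simp: inst_def)
next
  case (SumRcv2 \<Gamma> Q c v W P)
  then show ?case by (auto simp: inst_def)
qed (auto simp: inst_def)

lemma ChSub:
  assumes "trans I \<delta> \<Gamma> W l W'"
  shows "chS W' \<subseteq> chS W \<and> (\<forall>e v. l = AOut e v \<longrightarrow> e \<in> chS W)"
  using assms
proof (induction rule: trans.induct)
  case (Rec \<Gamma> X P l W)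
  then show ?case using chP_substX[of X "PFix X P" P] by auto
qed auto

lemma sig_SP:
  assumes "trans I \<delta> \<Gamma> W l W'"
  shows "l = ASig \<Longrightarrow> W = SP P \<Longrightarrow> \<exists>P'. W' = SP P'"
  using assms
  by (induction arbitrary: P rule: trans.induct) auto

lemma rcvP_substX: "rcvP P c \<Longrightarrow> rcvP (substX X R P) c"
  by (induction P) auto

lemma InpP: "guardedP P \<Longrightarrow> fvpP P = {} \<Longrightarrow> \<exists>W'. trans I \<delta> \<Gamma> (SP P) (AIn c v) W'"
proof (induction "hs P" arbitrary: P rule: less_induct)
  case less
  show ?case
  proof (cases "rcvC \<Gamma> (SP P) c")
    case False
    then show ?thesis by (blast intro: trans.RcvIgn)
  next
    case True
    then have idl: "idle \<Gamma> c" and r: "rcvP P c" by (auto simp: rcvC_def)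
    show ?thesis
    proof (cases P)
      case (PRcv d x P1 Q1)
      then show ?thesis using r idl by (auto intro: trans.Rcv)
    next
      case (PSum P1 Q1)
      show ?thesis
      proof (cases "rcvP P1 c")
        case True
        obtain W' where "trans I \<delta> \<Gamma> (SP P1) (AIn c v) W'"
          using less.hyps[of P1] less.prems PSum by auto
        moreover have "rcvC \<Gamma> (SP P1) c" using True idl by (simp add: rcvC_def)
        ultimately show ?thesis using PSum by (blast intro: trans.SumRcv1)
      next
        case False
        then have "rcvP Q1 c" using r PSum by simp
        obtain W' where "trans I \<delta> \<Gamma> (SP Q1) (AIn c v) W'"
          using less.hyps[of Q1] less.prems PSum by auto
        moreover have "rcvC \<Gamma> (SP Q1) c" using \<open>rcvP Q1 c\<close> idl by (simp add: rcvC_def)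
        ultimately show ?thesis using PSum by (blast intro: trans.SumRcv2)
      qed
    next
      case (PFix X P1)
      have ok: "okS (SP (substX X (PFix X P1) P1))" using unfold_ok[of X P1] less.prems PFix by simp
      have "hs (substX X (PFix X P1) P1) < hs P" using hs_substX[of X P1] less.prems PFix by simp
      then obtain W' where "trans I \<delta> \<Gamma> (SP (substX X (PFix X P1) P1)) (AIn c v) W'"
        using less.hyps ok by auto
      then show ?thesis using PFix by (auto intro: trans.Rec)
    qed (use r in auto)
  qed
qed

lemma Inp: "okS W \<Longrightarrow> \<exists>W'. trans I \<delta> \<Gamma> W (AIn c v) W'"
proof (induction W arbitrary: \<Gamma>)
  case (SP P) then show ?case using InpP by auto
next
  case (SAct d x P)
  have "\<not> rcvC \<Gamma> (SAct d x P) c" by (simp add: rcvC_def)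
  then show ?case by (blast intro: trans.RcvIgn)
next
  case (SPar W1 W2)
  obtain A where A: "trans I \<delta> \<Gamma> W1 (AIn c v) A" using SPar.IH(1)[of \<Gamma>] SPar.prems by auto
  obtain B where "trans I \<delta> \<Gamma> W2 (AIn c v) B" using SPar.IH(2)[of \<Gamma>] SPar.prems by auto
  note A this
  then show ?case by (blast intro: trans.RcvPar)
next
  case (SNu d n u W)
  show ?case
  proof (cases "d = c")
    case True
    then have "\<not> rcvC \<Gamma> (SNu d n u W) c" by (simp add: rcvC_def)
    then show ?thesis by (blast intro: trans.RcvIgn)
  next
    case False
    obtain W' where "trans I \<delta> (\<Gamma>(d := (n, u))) W (AIn c v) W'" using SNu by auto
    moreover have "d \<notin> chans (AIn c v)" using False by simp
    ultimately show ?thesis by (blast intro: trans.ResV)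
  qed
qed


lemma closed_ok: "closedS W \<Longrightarrow> okS W"
  by (induction W) (auto simp: closedS_def)

lemma exposed_not_idle: "exposed \<Gamma> c \<longleftrightarrow> \<not> idle \<Gamma> c"
  by (simp add: exposed_def idle_def)

lemma ProgP: "closedS (SP P) \<Longrightarrow>
   (\<exists>P'. trans I \<delta> \<Gamma> (SP P) ASig (SP P')) \<or> (\<exists>l W'. inst l \<and> trans I \<delta> \<Gamma> (SP P) l W')"
proof (induction "hs P" arbitrary: P rule: less_induct)
  case less
  show ?case
  proof (cases P)
    case (PSnd c e Q)
    then have "fvE e = {}" using less.prems by (auto simp: closedS_def)
    then obtain v where "evalE I e = Some v" using evalE_closed[of e I] by auto
    then have "trans I \<delta> \<Gamma> (SP P) (AOut c v) (SP (sigpow (\<delta> v) Q))" using PSnd by (simp add: trans.Snd)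
    then show ?thesis by (auto simp: inst_def)
  next
    case (PRcv c x Q1 Q2)
    show ?thesis
    proof (cases "idle \<Gamma> c")
      case True
      then have "trans I \<delta> \<Gamma> (SP P) ASig (SP Q2)" using PRcv by (simp add: trans.Timeout)
      then show ?thesis by blast
    next
      case False
      then have "exposed \<Gamma> c" by (simp add: exposed_not_idle)
      then have "trans I \<delta> \<Gamma> (SP P) ATau (SAct c x (substP x Err Q1))" using PRcv by (simp add: trans.RcvLate)
      then show ?thesis by (auto simp: inst_def)
    qed
  next
    case (PSig Q)
    then have "trans I \<delta> \<Gamma> (SP P) ASig (SP Q)" by (simp add: trans.Sleep)
    then show ?thesis by blast
  next
    case (PTau Q)
    then have "trans I \<delta> \<Gamma> (SP P) ATau (SP Q)" by (simp add: trans.Tau)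
    then show ?thesis by (auto simp: inst_def)
  next
    case (PSum P1 P2)
    have c1: "closedS (SP P1)" and c2: "closedS (SP P2)" using less.prems PSum by (auto simp: closedS_def)
    have h1: "hs P1 < hs P" and h2: "hs P2 < hs P" using PSum by auto
    note IH1 = less.hyps[OF h1 c1] and IH2 = less.hyps[OF h2 c2]
    show ?thesis
    proof (cases "\<exists>l W'. inst l \<and> trans I \<delta> \<Gamma> (SP P1) l W'")
      case True
      then obtain l W' where "inst l" "trans I \<delta> \<Gamma> (SP P1) l W'" by blast
      moreover have "l = ATau \<or> (\<exists>c v. l = AOut c v)" using \<open>inst l\<close> by (simp add: inst_def)
      ultimately have "trans I \<delta> \<Gamma> (SP P) l W'" using PSum by (simp add: trans.Sum1)
      then show ?thesis using \<open>inst l\<close> by blast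
    next
      case F1: False
      show ?thesis
      proof (cases "\<exists>l W'. inst l \<and> trans I \<delta> \<Gamma> (SP P2) l W'")
        case True
        then obtain l W' where "inst l" "trans I \<delta> \<Gamma> (SP P2) l W'" by blast
        moreover have "l = ATau \<or> (\<exists>c v. l = AOut c v)" using \<open>inst l\<close> by (simp add: inst_def)
        ultimately have "trans I \<delta> \<Gamma> (SP P) l W'" using PSum by (simp add: trans.Sum2)
        then show ?thesis using \<open>inst l\<close> by blast
      next
        case False
        then obtain Q1 Q2 where "trans I \<delta> \<Gamma> (SP P1) ASig (SP Q1)" "trans I \<delta> \<Gamma> (SP P2) ASig (SP Q2)"
          using IH1 IH2 F1 by blast
        then have "trans I \<delta> \<Gamma> (SP P) ASig (SP (PSum Q1 Q2))" using PSum by (simp add: trans.SumTime)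
        then show ?thesis by blast
      qed
    qed
  next
    case (PCond b Q1 Q2)
    show ?thesis
    proof (cases "evalB I \<Gamma> b")
      case True
      then have "trans I \<delta> \<Gamma> (SP P) ATau (SP (PSig Q1))" using PCond by (simp add: trans.Then)
      then show ?thesis by (auto simp: inst_def)
    next
      case False
      then have "trans I \<delta> \<Gamma> (SP P) ATau (SP (PSig Q2))" using PCond by (simp add: trans.Else)
      then show ?thesis by (auto simp: inst_def)
    qed
  next
    case (PVar X) then show ?thesis using less.prems by (simp add: closedS_def)
  next
    case PNil
    then have "trans I \<delta> \<Gamma> (SP P) ASig (SP PNil)" by (simp add: trans.TimeNil)
    then show ?thesis by blast
  next
    case (PFix X Q)
    have cl: "closedS (SP (substX X (PFix X Q) Q))" using unfold_closed[of X Q] less.prems PFix by simp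
    have "\<not> unguarded X Q" using less.prems PFix by (simp add: closedS_def)
    then have "hs (substX X (PFix X Q) Q) < hs P" using hs_substX[of X Q] PFix by simp
    note IH = less.hyps[OF this cl]
    then show ?thesis
    proof
      assume "\<exists>P'. trans I \<delta> \<Gamma> (SP (substX X (PFix X Q) Q)) ASig (SP P')"
      then obtain P' where "trans I \<delta> \<Gamma> (SP (substX X (PFix X Q) Q)) ASig (SP P')" by blast
      then have "trans I \<delta> \<Gamma> (SP P) ASig (SP P')" using PFix by (simp add: trans.Rec)
      then show ?thesis by blast
    next
      assume "\<exists>l W'. inst l \<and> trans I \<delta> \<Gamma> (SP (substX X (PFix X Q) Q)) l W'"
      then obtain l W' where "inst l" "trans I \<delta> \<Gamma> (SP (substX X (PFix X Q) Q)) l W'" by blast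
      then have "trans I \<delta> \<Gamma> (SP P) l W'" using PFix by (simp add: trans.Rec)
      then show ?thesis using \<open>inst l\<close> by blast
    qed
  qed
qed

lemma Prog: "wf \<Gamma> W \<Longrightarrow> closedS W \<Longrightarrow>
   (\<exists>W'. trans I \<delta> \<Gamma> W ASig W') \<or> (\<exists>l W'. inst l \<and> trans I \<delta> \<Gamma> W l W')"
proof (induction W arbitrary: \<Gamma>)
  case (SP P)
  then show ?case using ProgP[of P I \<delta> \<Gamma>] by blast
next
  case (SAct c x P)
  then have "exposed \<Gamma> c" by (auto elim: wfActE)
  show ?case
  proof (cases "fst (\<Gamma> c) > 1")
    case True
    then have "trans I \<delta> \<Gamma> (SAct c x P) ASig (SAct c x P)" by (rule trans.ActRcv)
    then show ?thesis by blast
  next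
    case False
    then have "\<Gamma> c = (1, snd (\<Gamma> c))" using \<open>exposed \<Gamma> c\<close> by (auto simp: exposed_def prod_eq_iff)
    then have "trans I \<delta> \<Gamma> (SAct c x P) ASig (SP (substP x (snd (\<Gamma> c)) P))" by (rule trans.EndRcv)
    then show ?thesis by blast
  qed
next
  case (SPar W1 W2)
  have w: "wf \<Gamma> W1" "wf \<Gamma> W2" "closedS W1" "closedS W2" using SPar.prems by (auto elim: wfParE)
  note IH1 = SPar.IH(1)[OF w(1) w(3)] and IH2 = SPar.IH(2)[OF w(2) w(4)]
  show ?case
  proof (cases "\<exists>l W'. inst l \<and> trans I \<delta> \<Gamma> W1 l W'")
    case True
    then obtain l W' where l: "inst l" "trans I \<delta> \<Gamma> W1 l W'" by blast
    then consider "l = ATau" | e v where "l = AOut e v" by (auto simp: inst_def)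
    then show ?thesis
    proof cases
      case 1
      then have "trans I \<delta> \<Gamma> (SPar W1 W2) ATau (SPar W' W2)" using l(2) by (simp add: trans.TauPar1)
      then show ?thesis by (auto simp: inst_def)
    next
      case 2
      obtain W2' where "trans I \<delta> \<Gamma> W2 (AIn e v) W2'" using Inp[OF closed_ok[OF w(4)], of I \<delta> \<Gamma> e v] by blast
      moreover have "trans I \<delta> \<Gamma> W1 (AOut e v) W'" using l(2) 2 by simp
      ultimately have "trans I \<delta> \<Gamma> (SPar W1 W2) (AOut e v) (SPar W' W2')" by (simp add: trans.Sync1)
      then show ?thesis by (auto simp: inst_def)
    qed
  next
    case F1: False
    show ?thesis
    proof (cases "\<exists>l W'. inst l \<and> trans I \<delta> \<Gamma> W2 l W'")
      case True
      then obtain l W' where l: "inst l" "trans I \<delta> \<Gamma> W2 l W'" by blast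
      then consider "l = ATau" | e v where "l = AOut e v" by (auto simp: inst_def)
      then show ?thesis
      proof cases
        case 1
        then have "trans I \<delta> \<Gamma> (SPar W1 W2) ATau (SPar W1 W')" using l(2) by (simp add: trans.TauPar2)
        then show ?thesis by (auto simp: inst_def)
      next
        case 2
        obtain W1' where "trans I \<delta> \<Gamma> W1 (AIn e v) W1'" using Inp[OF closed_ok[OF w(3)], of I \<delta> \<Gamma> e v] by blast
        moreover have "trans I \<delta> \<Gamma> W2 (AOut e v) W'" using l(2) 2 by simp
        ultimately have "trans I \<delta> \<Gamma> (SPar W1 W2) (AOut e v) (SPar W1' W')" by (simp add: trans.Sync2)
        then show ?thesis by (auto simp: inst_def)
      qed
    next
      case False
      then obtain A B where "trans I \<delta> \<Gamma> W1 ASig A" "trans I \<delta> \<Gamma> W2 ASig B" using IH1 IH2 F1 by blast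
      then have "trans I \<delta> \<Gamma> (SPar W1 W2) ASig (SPar A B)" by (simp add: trans.TimePar)
      then show ?thesis by blast
    qed
  qed
next
  case (SNu c n v W)
  have w: "wf (\<Gamma>(c := (n, v))) W" "closedS W" using SNu.prems by (auto elim: wfNuE)
  note IH = SNu.IH[OF w]
  then show ?case
  proof
    assume "\<exists>W'. trans I \<delta> (\<Gamma>(c := (n, v))) W ASig W'"
    then obtain W' where "trans I \<delta> (\<Gamma>(c := (n, v))) W ASig W'" by blast
    moreover have "c \<notin> chans ASig" by simp
    ultimately have "trans I \<delta> \<Gamma> (SNu c n v W) ASig
                (SNu c (fst (updA \<delta> ASig (\<Gamma>(c := (n, v))) c))
                       (snd (updA \<delta> ASig (\<Gamma>(c := (n, v))) c)) W')" by (rule trans.ResV)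
    then show ?thesis by blast
  next
    assume "\<exists>l W'. inst l \<and> trans I \<delta> (\<Gamma>(c := (n, v))) W l W'"
    then obtain l W' where l: "inst l" "trans I \<delta> (\<Gamma>(c := (n, v))) W l W'" by blast
    then consider "l = ATau" | e w where "l = AOut e w" "e = c" | e w where "l = AOut e w" "e \<noteq> c"
      by (auto simp: inst_def)
    then show ?thesis
    proof cases
      case 1
      then have "c \<notin> chans l" by (auto simp: inst_def)
      with l(2) have "trans I \<delta> \<Gamma> (SNu c n v W) l
                (SNu c (fst (updA \<delta> l (\<Gamma>(c := (n, v))) c))
                       (snd (updA \<delta> l (\<Gamma>(c := (n, v))) c)) W')" by (rule trans.ResV)
      then show ?thesis using l(1) by blast
    next
      case 2
      then have "trans I \<delta> (\<Gamma>(c := (n, v))) W (AOut c w) W'" using l(2) by simp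
      from trans.ResI[OF this] show ?thesis by (auto simp: inst_def)
    next
      case 3
      then have "c \<notin> chans l" by (auto simp: inst_def)
      with l(2) have "trans I \<delta> \<Gamma> (SNu c n v W) l
                (SNu c (fst (updA \<delta> l (\<Gamma>(c := (n, v))) c))
                       (snd (updA \<delta> l (\<Gamma>(c := (n, v))) c)) W')" by (rule trans.ResV)
      then show ?thesis using l(1) by blast
    qed
  qed
qed

definition redi where
  "redi I \<delta> C C' \<longleftrightarrow> (\<exists>l. inst l \<and> trans I \<delta> (fst C) (snd C) l (snd C') \<and> fst C' = updA \<delta> l (fst C))"

lemma WT:
  assumes dp: "\<forall>v. \<delta> v \<ge> 1"
  shows "wf \<Gamma> W \<Longrightarrow> closedS W \<Longrightarrow> \<exists>\<Gamma>' W'. (redi I \<delta>)\<^sup>*\<^sup>* (\<Gamma>, W) (\<Gamma>', W') \<and> wf \<Gamma>' W' \<and> closedS W'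
     \<and> (\<exists>W''. trans I \<delta> \<Gamma>' W' ASig W'')"
proof (induction "sw W" arbitrary: \<Gamma> W rule: less_induct)
  case less
  from Prog[OF less.prems, of I \<delta>] show ?case
  proof
    assume "\<exists>W'. trans I \<delta> \<Gamma> W ASig W'"
    then show ?thesis using less.prems by blast
  next
    assume "\<exists>l W'. inst l \<and> trans I \<delta> \<Gamma> W l W'"
    then obtain l W' where l: "inst l" "trans I \<delta> \<Gamma> W l W'" by blast
    have "sw W' < sw W" using Dec[OF l(2) dp] closed_ok[OF less.prems(2)] l(1) by blast
    moreover have "wf (updA \<delta> l \<Gamma>) W' \<and> closedS W'" using Pres[OF l(2) dp] less.prems by blast
    ultimately obtain \<Gamma>' W'' where r: "(redi I \<delta>)\<^sup>*\<^sup>* (updA \<delta> l \<Gamma>, W') (\<Gamma>', W'')" "wf \<Gamma>' W''" "closedS W''"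
       "\<exists>W3. trans I \<delta> \<Gamma>' W'' ASig W3"
      using less.hyps by blast
    have "redi I \<delta> (\<Gamma>, W) (updA \<delta> l \<Gamma>, W')" using l by (auto simp: redi_def)
    then have "(redi I \<delta>)\<^sup>*\<^sup>* (\<Gamma>, W) (\<Gamma>', W'')" using r(1) by (rule converse_rtranclp_into_rtranclp)
    then show ?thesis using r by blast
  qed
qed


lemma redi_red: "redi I \<delta> C C' \<Longrightarrow> red I \<delta> C C'"
  by (auto simp: redi_def red_def inst_def)

lemma redi_star_red: "(redi I \<delta>)\<^sup>*\<^sup>* C C' \<Longrightarrow> (red I \<delta>)\<^sup>*\<^sup>* C C'"
proof (induction rule: rtranclp_induct)
  case base then show ?case by simp
next
  case (step y z) then show ?case using redi_red[of I \<delta> y z] by (simp add: rtranclp.rtrancl_into_rtrancl)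
qed

lemma sndUpd_other: "e \<noteq> d \<Longrightarrow> sndUpd \<delta> e v \<Gamma> d = \<Gamma> d"
  by (simp add: sndUpd_def)

lemma red_fresh:
  assumes "red I \<delta> C C'" "d \<notin> chS (snd C)"
  shows "d \<notin> chS (snd C') \<and> fst (fst C' d) \<le> fst (fst C d)"
proof -
  obtain l where l: "\<forall>c v. l \<noteq> AIn c v" "trans I \<delta> (fst C) (snd C) l (snd C')" "fst C' = updA \<delta> l (fst C)"
    using assms(1) by (auto simp: red_def)
  note cs = ChSub[OF l(2)]
  have "fst (fst C' d) \<le> fst (fst C d)"
  proof (cases l)
    case (AOut e v)
    then have "e \<noteq> d" using cs assms(2) by auto
    then show ?thesis using l(3) AOut by (simp add: sndUpd_other)
  next
    case (AIn e v) then show ?thesis using l(1) by blast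
  qed (use l(3) in auto)
  then show ?thesis using cs assms(2) by auto
qed

lemma redi_fresh:
  assumes "redi I \<delta> C C'" "d \<notin> chS (snd C)"
  shows "d \<notin> chS (snd C') \<and> fst C' d = fst C d"
proof -
  obtain l where l: "inst l" "trans I \<delta> (fst C) (snd C) l (snd C')" "fst C' = updA \<delta> l (fst C)"
    using assms(1) by (auto simp: redi_def)
  note cs = ChSub[OF l(2)]
  have "fst C' d = fst C d"
  proof (cases l)
    case (AOut e v)
    then have "e \<noteq> d" using cs assms(2) by auto
    then show ?thesis using l(3) AOut by (simp add: sndUpd_other)
  qed (use l in \<open>auto simp: inst_def\<close>)
  then show ?thesis using cs assms(2) by auto
qed

lemma redi_star_fresh:
  "(redi I \<delta>)\<^sup>*\<^sup>* C C' \<Longrightarrow> d \<notin> chS (snd C) \<Longrightarrow> d \<notin> chS (snd C') \<and> fst C' d = fst C d"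
proof (induction rule: rtranclp_induct)
  case base then show ?case by simp
next
  case (step y z) then show ?case using redi_fresh[of I \<delta> y z d] by simp
qed

lemma reach_idle:
  assumes dp: "\<forall>v. \<delta> v \<ge> 1"
  shows "wf \<Gamma> W \<Longrightarrow> closedS W \<Longrightarrow> d \<notin> chS W \<Longrightarrow>
    \<exists>C'. (red I \<delta>)\<^sup>*\<^sup>* (\<Gamma>, W) C' \<and> idle (fst C') d \<and> d \<notin> chS (snd C')"
proof (induction "fst (\<Gamma> d)" arbitrary: \<Gamma> W rule: less_induct)
  case less
  show ?case
  proof (cases "fst (\<Gamma> d) = 0")
    case True
    then show ?thesis using less.prems by (auto simp: idle_def)
  next
    case False
    obtain \<Gamma>' W' W'' where r: "(redi I \<delta>)\<^sup>*\<^sup>* (\<Gamma>, W) (\<Gamma>', W')" "wf \<Gamma>' W'" "closedS W'"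
      "trans I \<delta> \<Gamma>' W' ASig W''"
      using WT[OF dp less.prems(1,2), of I] by blast
    have f: "d \<notin> chS W'" "\<Gamma>' d = \<Gamma> d" using redi_star_fresh[OF r(1)] less.prems(3) by auto
    have red1: "red I \<delta> (\<Gamma>', W') (updA \<delta> ASig \<Gamma>', W'')" using r(4) by (auto simp: red_def)
    have p: "wf (updA \<delta> ASig \<Gamma>') W'' \<and> closedS W''" using Pres[OF r(4) dp] r(2,3) by blast
    have f2: "d \<notin> chS W''" using ChSub[OF r(4)] f(1) by auto
    have lt: "fst (updA \<delta> ASig \<Gamma>' d) < fst (\<Gamma> d)" using f(2) False by simp
    obtain C' where C': "(red I \<delta>)\<^sup>*\<^sup>* (updA \<delta> ASig \<Gamma>', W'') C'" "idle (fst C') d" "d \<notin> chS (snd C')"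
      using less.hyps[of "updA \<delta> ASig \<Gamma>'" W'', OF lt] p f2 by blast
    have "(red I \<delta>)\<^sup>*\<^sup>* (\<Gamma>, W) (\<Gamma>', W')" using redi_star_red[OF r(1)] .
    also have "(red I \<delta>)\<^sup>*\<^sup>* (\<Gamma>', W') (updA \<delta> ASig \<Gamma>', W'')" using red1 by simp
    also note C'(1)
    finally show ?thesis using C' by blast
  qed
qed

lemma no_barb_star:
  "(red I \<delta>)\<^sup>*\<^sup>* C C' \<Longrightarrow> d \<notin> chS (snd C) \<Longrightarrow> idle (fst C) d \<Longrightarrow> d \<notin> chS (snd C') \<and> idle (fst C') d"
proof (induction rule: rtranclp_induct)
  case base then show ?case by simp
next
  case (step y z) then show ?case using red_fresh[of I \<delta> y z d] by (auto simp: idle_def)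
qed

lemma no_wbarb: "d \<notin> chS (snd C) \<Longrightarrow> idle (fst C) d \<Longrightarrow> \<not> wbarb I \<delta> C d"
  unfolding wbarb_def barb_def using no_barb_star[of I \<delta> C _ d] by (auto simp: exposed_not_idle)

lemma rc_star:
  assumes rc: "reduction_closed I \<delta> R"
  shows "(red I \<delta>)\<^sup>*\<^sup>* C1 C1' \<Longrightarrow> R C1 C2 \<Longrightarrow> \<exists>C2'. (red I \<delta>)\<^sup>*\<^sup>* C2 C2' \<and> R C1' C2'"
proof (induction rule: rtranclp_induct)
  case base then show ?case by blast
next
  case (step y z)
  then obtain C2a where a: "(red I \<delta>)\<^sup>*\<^sup>* C2 C2a" "R y C2a" by blast
  then obtain C2b where b: "(red I \<delta>)\<^sup>*\<^sup>* C2a C2b" "R z C2b"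
    using rc step.hyps(2) unfolding reduction_closed_def by blast
  from a(1) b(1) have "(red I \<delta>)\<^sup>*\<^sup>* C2 C2b" by (rule rtranclp_trans)
  then show ?case using b(2) by blast
qed

lemma wbarb_pre: "(red I \<delta>)\<^sup>*\<^sup>* C C' \<Longrightarrow> wbarb I \<delta> C' d \<Longrightarrow> wbarb I \<delta> C d"
  unfolding wbarb_def by (meson rtranclp_trans)


definition Sx :: "'c \<Rightarrow> ('c,'x,'p,'d,'f) proc" where
  "Sx d = PFix undefined (PSnd d (EVal (VCl Err)) (PVar undefined))"
definition Ux :: "'c \<Rightarrow> ('c,'x,'p,'d,'f) proc" where
  "Ux d = PSnd d (EVal (VCl Err)) (Sx d)"
definition Tx :: "'c \<Rightarrow> 'c \<Rightarrow> ('c,'x,'p,'d,'f) sys" where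
  "Tx c d = SP (PCond (BExp c) (Sx d) PNil)"

definition good :: "('c,'d) env \<Rightarrow> 'c \<Rightarrow> 'c \<Rightarrow> ('c,'x,'p,'d,'f) sys \<Rightarrow> bool" where
  "good \<Gamma> c d T \<longleftrightarrow> (T = Tx c d \<and> exposed \<Gamma> c) \<or> (\<exists>j. T = SP (sigpow j (Sx d))) \<or> T = SP (Ux d)"

lemma closed_Sx[simp]: "closedS (SP (Sx d))" by (simp add: Sx_def closedS_def)
lemma closed_sigpow: "closedS (SP (sigpow j P)) = closedS (SP P)" by (simp add: closedS_def)
lemma closed_Tx: "closedS (Tx c d)" by (simp add: Tx_def Sx_def closedS_def)

inductive_cases transCondE: "trans I \<delta> \<Gamma> (SP (PCond b P Q)) l W"
inductive_cases transSigE: "trans I \<delta> \<Gamma> (SP (PSig P)) l W"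
inductive_cases transFixE: "trans I \<delta> \<Gamma> (SP (PFix X P)) l W"
inductive_cases transSndE: "trans I \<delta> \<Gamma> (SP (PSnd c e P)) l W"
inductive_cases transParE: "trans I \<delta> \<Gamma> (SPar W1 W2) l W"

lemma g_sig: "good \<Gamma> c d (SP (sigpow j (Sx d)))" unfolding good_def by blast
lemma g_S: "good \<Gamma> c d (SP (Sx d))" using g_sig[of \<Gamma> c d 0] by simp
lemma g_U: "good \<Gamma> c d (SP (Ux d))" unfolding good_def by blast
lemma g_T: "exposed \<Gamma> c \<Longrightarrow> good \<Gamma> c d (Tx c d)" unfolding good_def by blast

lemma U_step: "trans I \<delta> \<Gamma> (SP (Ux d)) l T' \<Longrightarrow> good (updA \<delta> l \<Gamma>) c d T'"
  unfolding Ux_def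
  apply (erule transSndE)
  subgoal for v using g_sig by simp
  subgoal for e v using g_U unfolding Ux_def by simp
  done

lemma unfold_Sx: "substX undefined (PFix undefined (PSnd d (EVal (VCl Err)) (PVar undefined))) (PSnd d (EVal (VCl Err)) (PVar undefined))
   = Ux d"
  by (simp add: Ux_def Sx_def)

lemma S_step: "trans I \<delta> \<Gamma> (SP (Sx d)) l T' \<Longrightarrow> good (updA \<delta> l \<Gamma>) c d T'"
  unfolding Sx_def
  apply (erule transFixE)
  subgoal for e v using g_S unfolding Sx_def by simp
  subgoal using U_step unfold_Sx by metis
  done

lemma good_step:
  assumes "trans I \<delta> \<Gamma> T l T'" "good \<Gamma> c d T"
  shows "good (updA \<delta> l \<Gamma>) c d T'"
proof -
  consider "T = Tx c d" "exposed \<Gamma> c" | j where "T = SP (sigpow j (Sx d))" | "T = SP (Ux d)"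
    using assms(2) unfolding good_def by blast
  then show ?thesis
  proof cases
    case 1
    have t: "trans I \<delta> \<Gamma> (SP (PCond (BExp c) (Sx d) PNil)) l T'" using assms(1) 1 by (simp add: Tx_def)
    have ex: "exposed \<Gamma> c" by (rule 1(2))
    show ?thesis using t
      apply (rule transCondE)
      subgoal for e v
        using g_T[of "sndUpd \<delta> e v \<Gamma>" c d] sndUpd_mono[OF ex] unfolding Tx_def by simp
      subgoal using g_sig[of _ c d 1] by simp
      subgoal using ex by simp
      done
  next
    case (2 j)
    show ?thesis
    proof (cases j)
      case 0
      then show ?thesis using S_step assms(1) 2 by simp
    next
      case (Suc k)
      have t: "trans I \<delta> \<Gamma> (SP (PSig (sigpow k (Sx d)))) l T'" using assms(1) 2 Suc by simp
      show ?thesis using t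
        apply (rule transSigE)
        subgoal for e v using g_sig[of _ c d "Suc k"] by simp
        subgoal using g_sig[of _ c d k] by simp
        done
    qed
  next
    case 3
    then show ?thesis using U_step assms(1) by simp
  qed
qed

definition Inv2 :: "'c \<Rightarrow> 'c \<Rightarrow> ('c,'x,'p,'d,'f) config \<Rightarrow> bool" where
  "Inv2 c d C \<longleftrightarrow> (\<exists>Wx T. snd C = SPar Wx T \<and> wf (fst C) Wx \<and> closedS Wx \<and> good (fst C) c d T)"

lemma updA_in_out: "updA \<delta> (AIn e v) \<Gamma> = updA \<delta> (AOut e v) \<Gamma>" by simp

lemma Inv2_step:
  assumes dp: "\<forall>v. \<delta> v \<ge> 1" and r: "red I \<delta> C C'" and inv: "Inv2 c d C"
  shows "Inv2 c d C'"
proof -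
  obtain Wx T where i: "snd C = SPar Wx T" "wf (fst C) Wx" "closedS Wx" "good (fst C) c d T"
    using inv by (auto simp: Inv2_def)
  obtain l where l: "\<forall>c v. l \<noteq> AIn c v" "trans I \<delta> (fst C) (SPar Wx T) l (snd C')" "fst C' = updA \<delta> l (fst C)"
    using r i(1) by (auto simp: red_def)
  have Pr: "\<And>l' A'. trans I \<delta> (fst C) Wx l' A' \<Longrightarrow> wf (updA \<delta> l' (fst C)) A' \<and> closedS A'"
    using Pres dp i by blast
  have Gd: "\<And>l' B'. trans I \<delta> (fst C) T l' B' \<Longrightarrow> good (updA \<delta> l' (fst C)) c d B'"
    by (erule good_step) (rule i(4))
  show ?thesis using l(2)
    apply (rule transParE)
    subgoal for e v using l(1) by blast
    subgoal for e v A' B' using Pr[of "AOut e v" A'] Gd[of "AIn e v" B'] l(3) by (auto simp: Inv2_def)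
    subgoal for e v A' B' using Pr[of "AIn e v" A'] Gd[of "AOut e v" B'] l(3) by (auto simp: Inv2_def)
    subgoal for e v using l(1) by blast
    subgoal for A' B' using Pr[of ASig A'] Gd[of ASig B'] l(3) by (auto simp: Inv2_def)
    subgoal for A' using Pr[of ATau A'] l(3) i by (auto simp: Inv2_def)
    subgoal for B' using Gd[of ATau B'] l(3) i by (auto simp: Inv2_def)
    done
qed

lemma Inv2_star: assumes dp: "\<forall>v. \<delta> v \<ge> 1"
  shows "(red I \<delta>)\<^sup>*\<^sup>* C C' \<Longrightarrow> Inv2 c d C \<Longrightarrow> Inv2 c d C'"
  by (induction rule: rtranclp_induct) (auto intro: Inv2_step[OF dp])


lemma U_barb:
  assumes dp: "\<forall>v. \<delta> v \<ge> 1" and cl: "closedS Wx" and T: "T = SP (Sx d) \<or> T = SP (Ux d)"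
  shows "wbarb I \<delta> (\<Gamma>, SPar Wx T) d"
proof -
  have tU: "trans I \<delta> \<Gamma> (SP (Ux d)) (AOut d Err) (SP (sigpow (\<delta> Err) (Sx d)))"
    unfolding Ux_def by (rule trans.Snd) simp
  have "trans I \<delta> \<Gamma> (SP (PFix undefined (PSnd d (EVal (VCl Err)) (PVar undefined)))) (AOut d Err)
          (SP (sigpow (\<delta> Err) (Sx d)))"
    by (rule trans.Rec) (simp only: unfold_Sx tU)
  then have tS: "trans I \<delta> \<Gamma> (SP (Sx d)) (AOut d Err) (SP (sigpow (\<delta> Err) (Sx d)))"
    by (simp only: Sx_def[symmetric])
  have tT: "trans I \<delta> \<Gamma> T (AOut d Err) (SP (sigpow (\<delta> Err) (Sx d)))" using T tU tS by blast
  obtain Wx' where tW: "trans I \<delta> \<Gamma> Wx (AIn d Err) Wx'" using Inp[OF closed_ok[OF cl], of I \<delta> \<Gamma> d Err] by blast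
  have tP: "trans I \<delta> \<Gamma> (SPar Wx T) (AOut d Err) (SPar Wx' (SP (sigpow (\<delta> Err) (Sx d))))"
    using tW tT by (rule trans.Sync2)
  have r: "red I \<delta> (\<Gamma>, SPar Wx T) (sndUpd \<delta> d Err \<Gamma>, SPar Wx' (SP (sigpow (\<delta> Err) (Sx d))))"
    unfolding red_def using tP by (intro exI[of _ "AOut d Err"]) simp
  have b: "barb (sndUpd \<delta> d Err \<Gamma>, SPar Wx' (SP (sigpow (\<delta> Err) (Sx d)))) d"
    unfolding barb_def using sndUpd_exp[OF dp] by simp
  show ?thesis unfolding wbarb_def using r b by (blast intro: r_into_rtranclp)
qed

lemma redi_PSig:
  assumes "redi I \<delta> C C'" "snd C = SPar A (SP (PSig P))"
  shows "\<exists>A'. snd C' = SPar A' (SP (PSig P))"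
proof -
  obtain l where l: "inst l" "trans I \<delta> (fst C) (SPar A (SP (PSig P))) l (snd C')"
    using assms by (auto simp: redi_def)
  show ?thesis using l(2)
    apply (rule transParE)
    subgoal for e v using l(1) by (simp add: inst_def)
    subgoal for e v A' B' by (auto elim: transSigE)
    subgoal for e v A' B' by (auto elim: transSigE)
    subgoal for e v using l(1) by (simp add: inst_def)
    subgoal using l(1) by (simp add: inst_def)
    subgoal for A' by simp
    subgoal for B' by (auto elim: transSigE)
    done
qed

lemma redi_star_PSig:
  "(redi I \<delta>)\<^sup>*\<^sup>* C C' \<Longrightarrow> snd C = SPar A (SP (PSig P)) \<Longrightarrow> \<exists>A'. snd C' = SPar A' (SP (PSig P))"
proof (induction rule: rtranclp_induct)
  case base then show ?case by blast
next
  case (step y z) then show ?case using redi_PSig[of I \<delta> y z] by blast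
qed

lemma sig_PSig:
  assumes "trans I \<delta> \<Gamma> (SPar A (SP (PSig P))) ASig W"
  shows "\<exists>A'. W = SPar A' (SP P)"
  using assms
  apply (rule transParE)
  subgoal by simp
  subgoal by simp
  subgoal by simp
  subgoal by simp
  subgoal for A' B' by (auto elim: transSigE)
  subgoal by simp
  subgoal by simp
  done

lemma sig_barb:
  assumes dp: "\<forall>v. \<delta> v \<ge> 1"
  shows "wf \<Gamma> Wx \<Longrightarrow> closedS Wx \<Longrightarrow> wbarb I \<delta> (\<Gamma>, SPar Wx (SP (sigpow j (Sx d)))) d"
proof (induction j arbitrary: \<Gamma> Wx)
  case 0
  then show ?case using U_barb[OF dp, of Wx "SP (Sx d)" d I \<Gamma>] by simp
next
  case (Suc k)
  let ?W0 = "SPar Wx (SP (PSig (sigpow k (Sx d))))"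
  have c0: "closedS (SP (PSig (sigpow k (Sx d))))" using closed_sigpow[of "Suc k" "Sx d"] by simp
  have w0: "wf \<Gamma> ?W0" by (rule wf.wfPar[OF Suc.prems(1) wf.wfP[OF c0]])
  have cl0: "closedS ?W0" using Suc.prems(2) c0 by simp
  obtain \<Gamma>' W' W'' where r: "(redi I \<delta>)\<^sup>*\<^sup>* (\<Gamma>, ?W0) (\<Gamma>', W')" "wf \<Gamma>' W'" "closedS W'"
      "trans I \<delta> \<Gamma>' W' ASig W''"
    using WT[OF dp w0 cl0, of I] by blast
  obtain A' where A': "W' = SPar A' (SP (PSig (sigpow k (Sx d))))" using redi_star_PSig[OF r(1)] by auto
  obtain A'' where A'': "W'' = SPar A'' (SP (sigpow k (Sx d)))" using sig_PSig r(4) A' by blast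
  have p: "wf (updA \<delta> ASig \<Gamma>') W'' \<and> closedS W''" using Pres[OF r(4) dp] r(2,3) by blast
  then have "wf (updA \<delta> ASig \<Gamma>') A''" "closedS A''" using A'' by (auto elim: wfParE)
  then have b: "wbarb I \<delta> (updA \<delta> ASig \<Gamma>', W'') d" using Suc.IH A'' by simp
  have rd: "red I \<delta> (\<Gamma>', W') (updA \<delta> ASig \<Gamma>', W'')" using r(4) by (auto simp: red_def)
  have "(red I \<delta>)\<^sup>*\<^sup>* (\<Gamma>, ?W0) (updA \<delta> ASig \<Gamma>', W'')"
    using redi_star_red[OF r(1)] rd by (rule rtranclp.rtrancl_into_rtrancl)
  then have "wbarb I \<delta> (\<Gamma>, ?W0) d" using b by (rule wbarb_pre)
  then show ?case by simp
qed

lemma Inv2_barb: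
  assumes dp: "\<forall>v. \<delta> v \<ge> 1" and inv: "Inv2 c d C"
  shows "wbarb I \<delta> C d"
proof -
  obtain Wx T where i: "snd C = SPar Wx T" "wf (fst C) Wx" "closedS Wx" "good (fst C) c d T"
    using inv by (auto simp: Inv2_def)
  have Ceq: "C = (fst C, SPar Wx T)" using i(1) by (simp add: prod_eq_iff)
  consider "T = Tx c d" "exposed (fst C) c" | j where "T = SP (sigpow j (Sx d))" | "T = SP (Ux d)"
    using i(4) unfolding good_def by blast
  then show ?thesis
  proof cases
    case 1
    have "trans I \<delta> (fst C) (SP (PCond (BExp c) (Sx d) PNil)) ATau (SP (PSig (Sx d)))"
      by (rule trans.Then) (simp add: 1(2))
    then have "trans I \<delta> (fst C) T ATau (SP (PSig (Sx d)))" using 1(1) by (simp add: Tx_def)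
    then have "trans I \<delta> (fst C) (SPar Wx T) ATau (SPar Wx (SP (PSig (Sx d))))" by (rule trans.TauPar2)
    then have rd: "red I \<delta> (fst C, SPar Wx T) (fst C, SPar Wx (SP (PSig (Sx d))))"
      unfolding red_def by (intro exI[of _ ATau]) simp
    have "wbarb I \<delta> (fst C, SPar Wx (SP (sigpow 1 (Sx d)))) d" using sig_barb[OF dp i(2,3)] by blast
    then have "wbarb I \<delta> (fst C, SPar Wx (SP (PSig (Sx d)))) d" by simp
    then have "wbarb I \<delta> (fst C, SPar Wx T) d" using rd by (blast intro: wbarb_pre r_into_rtranclp)
    then show ?thesis using Ceq by simp
  next
    case (2 j)
    have "wbarb I \<delta> (fst C, SPar Wx (SP (sigpow j (Sx d)))) d" by (rule sig_barb[OF dp i(2,3)])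
    then show ?thesis using 2 Ceq by simp
  next
    case 3
    have "wbarb I \<delta> (fst C, SPar Wx (SP (Ux d))) d" using U_barb[OF dp i(3), of "SP (Ux d)" d I] by simp
    then show ?thesis using 3 Ceq by simp
  qed
qed

theorem mainTheorem13:
  fixes I :: "'f \<Rightarrow> 'd cval list \<Rightarrow> 'd cval"
    and \<delta> :: "'d cval \<Rightarrow> nat"
    and \<Gamma>1 \<Gamma>2 :: "('c,'d) env"
    and W1 W2 :: "('c,'x,'p,'d,'f) sys"
    and c :: 'c
  assumes chans_inf: "infinite (UNIV :: 'c set)"
    and delta_pos: "\<forall>v. \<delta> v \<ge> 1"
    and cong: "rbc I \<delta> (\<Gamma>1, W1) (\<Gamma>2, W2)"
    and wf1: "wf \<Gamma>1 W1"
    and wf2: "wf \<Gamma>2 W2"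
    and idle1: "idle \<Gamma>1 c"
  shows "idle \<Gamma>2 c"
proof (rule ccontr)
  assume "\<not> idle \<Gamma>2 c"
  then have ex2: "exposed \<Gamma>2 c" by (simp add: exposed_not_idle)
  obtain R where R: "\<forall>A B. R A B \<longrightarrow> configuration A \<and> configuration B" "symp R"
      "barb_preserving I \<delta> R" "reduction_closed I \<delta> R" "contextual R" "R (\<Gamma>1, W1) (\<Gamma>2, W2)"
    using cong unfolding rbc_def by blast
  have "configuration (\<Gamma>1, W1) \<and> configuration (\<Gamma>2, W2)" using R(1) R(6) by blast
  then have cl1: "closedS W1" and cl2: "closedS W2" by (simp_all add: configuration_def)
  obtain d where d: "d \<notin> chS W1" using ex_new_if_finite[OF chans_inf finite_chS[of W1]] by blast
  have RT: "R (\<Gamma>1, SPar W1 (Tx c d)) (\<Gamma>2, SPar W2 (Tx c d))"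
    using R(5)[unfolded contextual_def, rule_format, OF R(6) closed_Tx] .
  have "trans I \<delta> \<Gamma>1 (SP (PCond (BExp c) (Sx d) PNil)) ATau (SP (PSig PNil))"
    by (rule trans.Else) (simp add: idle1 exposed_not_idle)
  then have "trans I \<delta> \<Gamma>1 (Tx c d) ATau (SP (PSig PNil))" by (simp add: Tx_def)
  then have "trans I \<delta> \<Gamma>1 (SPar W1 (Tx c d)) ATau (SPar W1 (SP (PSig PNil)))" by (rule trans.TauPar2)
  then have st1: "red I \<delta> (\<Gamma>1, SPar W1 (Tx c d)) (\<Gamma>1, SPar W1 (SP (PSig PNil)))"
    unfolding red_def by (intro exI[of _ ATau]) simp
  obtain C2a where C2a: "(red I \<delta>)\<^sup>*\<^sup>* (\<Gamma>2, SPar W2 (Tx c d)) C2a" "R (\<Gamma>1, SPar W1 (SP (PSig PNil))) C2a"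
    using R(4) RT st1 unfolding reduction_closed_def by blast
  have cP: "closedS (SP (PSig PNil))" by (simp add: closedS_def)
  have w1a: "wf \<Gamma>1 (SPar W1 (SP (PSig PNil)))" by (rule wf.wfPar[OF wf1 wf.wfP[OF cP]])
  have c1a: "closedS (SPar W1 (SP (PSig PNil)))" using cl1 cP by simp
  have d1a: "d \<notin> chS (SPar W1 (SP (PSig PNil)))" using d by simp
  obtain C1b where C1b: "(red I \<delta>)\<^sup>*\<^sup>* (\<Gamma>1, SPar W1 (SP (PSig PNil))) C1b" "idle (fst C1b) d" "d \<notin> chS (snd C1b)"
    using reach_idle[OF delta_pos w1a c1a d1a, of I] by blast
  obtain C2b where C2b: "(red I \<delta>)\<^sup>*\<^sup>* C2a C2b" "R C1b C2b"
    using rc_star[OF R(4) C1b(1) C2a(2)] by blast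
  have inv0: "Inv2 c d (\<Gamma>2, SPar W2 (Tx c d))"
    using wf2 cl2 g_T[OF ex2] by (simp add: Inv2_def)
  have "(red I \<delta>)\<^sup>*\<^sup>* (\<Gamma>2, SPar W2 (Tx c d)) C2b" using C2a(1) C2b(1) by (rule rtranclp_trans)
  then have "Inv2 c d C2b" using inv0 by (rule Inv2_star[OF delta_pos])
  then have "wbarb I \<delta> C2b d" by (rule Inv2_barb[OF delta_pos])
  moreover have "R C2b C1b" using R(2) C2b(2) by (rule sympD)
  ultimately have "wbarb I \<delta> C1b d" using R(3)[unfolded barb_preserving_def, rule_format] by blast
  then show False using no_wbarb[OF C1b(3) C1b(2)] by blast
qed

end
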